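(* Let $F$ and $B$ be finite simplicial sets, let $G$ be a simplicial group acting simplicially on $F$ from the left, and let $\tau\colon B_q\to G_{q-1}$ ($q>0$) be a twisting function, so that $E(\tau)=F\times_\tau B$ is a twisted Cartesian product. Let $R\to A$ be a map of commutative rings. Equip the simplicial commutative $R$-algebra $\mathcal{L}^R_F(A)$ with the left action of $G$ by $R$-algebra isomorphisms given in degree $n$ by $g\cdot\bigl(\bigotimes_{f\in F_n}a_f\bigr)=\bigotimes_{f\in F_n}a_{g^{-1}f}$ for $g\in G_n$. Then there is an isomorphism of simplicial commutative $R$-algebras \[\mathcal{L}^R_{E(\tau)}(A)\cong \mathcal{L}^R_B\bigl(\mathcal{L}^R_F(A)^\tau\bigr),\] induced in each simplicial degree $n$ by the identification $\bigotimes_{(f,b)\in F_n\times B_n}A\cong\bigotimes_{b\in B_n}\bigotimes_{f\in F_n}A$.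
   Context: All tensor products are over $R$. For a finite simplicial set $X$ and a commutative $R$-algebra $A$, the (unpointed) Loday construction $\mathcal{L}^R_X(A)$ is the simplicial commutative $R$-algebra with $n$-simplices $\bigotimes_{x\in X_n}A$; the face map $d_i$ sends $\bigotimes_x a_x$ to $\bigotimes_{y\in X_{n-1}}\prod_{x: d_ix=y}a_x$ and the degeneracy $s_i$ sends it to $\bigotimes_{z\in X_{n+1}}\prod_{x:s_ix=z}a_x$ (empty products are $1$). A twisting function (Moore/May) for a simplicial group $G$ and simplicial set $B$ is a family of functions $\tau\colon B_q\to G_{q-1}$, $q>0$, with $d_0\tau(b)=[\tau(d_0b)]^{-1}\tau(d_1b)$ for $q>1$; $\tau(d_{i+1}b)=d_i\tau(b)$ for $i\ge1$, $q>1$; $\tau(s_{i+1}b)=s_i\tau(b)$ for $i\ge 0$; and $\tau(s_0b)=e$. If $G$ acts simplicially on $F$ from the left, the twisted Cartesian product $E(\tau)=F\times_\tau B$ is the simplicial set with $E(\tau)_n=F_n\times B_n$, $d_0(f,b)=(\tau(b)\cdot d_0f,d_0b)$, $d_i(f,b)=(d_if,d_ib)$ for $i>0$, $s_i(f,b)=(s_if,s_ib)$. If $C$ is a simplicial commutative $R$-algebra on which $G$ acts simplicially with each $G_q$ acting on $C_q$ by $R$-algebra isomorphisms, the twisted Loday construction $\mathcal{L}^R_B(C^\tau)$ is the simplicial commutative $R$-algebra with $n$-simplices $\bigotimes_{b\in B_n}C_n$ and structure maps on monomials: $d_0(\bigotimes_b f_b)=\bigotimes_{c\in B_{n-1}}\prod_{b:d_0b=c}\tau(b)(d_0f_b)$;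 $d_i(\bigotimes_b f_b)=\bigotimes_{c\in B_{n-1}}\prod_{b:d_ib=c}d_if_b$ for $1\le i\le n$; $s_i(\bigotimes_b f_b)=\bigotimes_{e\in B_{n+1}}\prod_{b:s_ib=e}s_if_b$. *)

theory Defs
  imports "HOL-Algebra.Algebra"
begin

definition simp_set :: "(nat \<Rightarrow> 'x set) \<Rightarrow> (nat \<Rightarrow> nat \<Rightarrow> 'x \<Rightarrow> 'x) \<Rightarrow> (nat \<Rightarrow> nat \<Rightarrow> 'x \<Rightarrow> 'x) \<Rightarrow> bool"
  where "simp_set Xs d s \<longleftrightarrow>
    (\<forall>n i x. 0 < n \<and> i \<le> n \<and> x \<in> Xs n \<longrightarrow> d n i x \<in> Xs (n - 1)) \<and>
    (\<forall>n i x. i \<le> n \<and> x \<in> Xs n \<longrightarrow> s n i x \<in> Xs (Suc n)) \<and>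
    (\<forall>n i j x. 2 \<le> n \<and> i < j \<and> j \<le> n \<and> x \<in> Xs n \<longrightarrow>
        d (n - 1) i (d n j x) = d (n - 1) (j - 1) (d n i x)) \<and>
    (\<forall>n i j x. i \<le> j \<and> j \<le> n \<and> x \<in> Xs n \<longrightarrow>
        s (Suc n) i (s n j x) = s (Suc n) (Suc j) (s n i x)) \<and>
    (\<forall>n i j x. i < j \<and> j \<le> n \<and> x \<in> Xs n \<longrightarrow>
        d (Suc n) i (s n j x) = s (n - 1) (j - 1) (d n i x)) \<and>
    (\<forall>n j x. j \<le> n \<and> x \<in> Xs n \<longrightarrow> d (Suc n) j (s n j x) = x \<and> d (Suc n) (Suc j) (s n j x) = x) \<and>
    (\<forall>n i j x. Suc j < i \<and> i \<le> Suc n \<and> x \<in> Xs n \<longrightarrow>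
        d (Suc n) i (s n j x) = s (n - 1) j (d n (i - 1) x))"

definition nondeg_simplices :: "(nat \<Rightarrow> 'x set) \<Rightarrow> (nat \<Rightarrow> nat \<Rightarrow> 'x \<Rightarrow> 'x) \<Rightarrow> (nat \<times> 'x) set"
  where "nondeg_simplices Xs s =
    {(n, x). x \<in> Xs n \<and> \<not> (\<exists>i<n. \<exists>y\<in>Xs (n - 1). x = s (n - 1) i y)}"

definition finite_simp_set :: "(nat \<Rightarrow> 'x set) \<Rightarrow> (nat \<Rightarrow> nat \<Rightarrow> 'x \<Rightarrow> 'x) \<Rightarrow> (nat \<Rightarrow> nat \<Rightarrow> 'x \<Rightarrow> 'x) \<Rightarrow> bool"
  where "finite_simp_set Xs d s \<longleftrightarrow> simp_set Xs d s \<and> finite (nondeg_simplices Xs s)"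

definition simp_group :: "(nat \<Rightarrow> 'g monoid) \<Rightarrow> (nat \<Rightarrow> nat \<Rightarrow> 'g \<Rightarrow> 'g) \<Rightarrow> (nat \<Rightarrow> nat \<Rightarrow> 'g \<Rightarrow> 'g) \<Rightarrow> bool"
  where "simp_group G d s \<longleftrightarrow> simp_set (\<lambda>n. carrier (G n)) d s \<and> (\<forall>n. group (G n)) \<and>
    (\<forall>n i. 0 < n \<and> i \<le> n \<longrightarrow> d n i \<in> hom (G n) (G (n - 1))) \<and>
    (\<forall>n i. i \<le> n \<longrightarrow> s n i \<in> hom (G n) (G (Suc n)))"

definition simp_action ::
  "(nat \<Rightarrow> 'g monoid) \<Rightarrow> (nat \<Rightarrow> nat \<Rightarrow> 'g \<Rightarrow> 'g) \<Rightarrow> (nat \<Rightarrow> nat \<Rightarrow> 'g \<Rightarrow> 'g) \<Rightarrow>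
   (nat \<Rightarrow> 'f set) \<Rightarrow> (nat \<Rightarrow> nat \<Rightarrow> 'f \<Rightarrow> 'f) \<Rightarrow> (nat \<Rightarrow> nat \<Rightarrow> 'f \<Rightarrow> 'f) \<Rightarrow>
   (nat \<Rightarrow> 'g \<Rightarrow> 'f \<Rightarrow> 'f) \<Rightarrow> bool"
  where "simp_action G dG sG F dF sF act \<longleftrightarrow>
    (\<forall>n. \<forall>g\<in>carrier (G n). \<forall>x\<in>F n. act n g x \<in> F n) \<and>
    (\<forall>n. \<forall>x\<in>F n. act n \<one>\<^bsub>G n\<^esub> x = x) \<and>
    (\<forall>n. \<forall>g\<in>carrier (G n). \<forall>h\<in>carrier (G n). \<forall>x\<in>F n.
        act n (g \<otimes>\<^bsub>G n\<^esub> h) x = act n g (act n h x)) \<and>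
    (\<forall>n i. 0 < n \<and> i \<le> n \<longrightarrow> (\<forall>g\<in>carrier (G n). \<forall>x\<in>F n.
        dF n i (act n g x) = act (n - 1) (dG n i g) (dF n i x))) \<and>
    (\<forall>n i. i \<le> n \<longrightarrow> (\<forall>g\<in>carrier (G n). \<forall>x\<in>F n.
        sF n i (act n g x) = act (Suc n) (sG n i g) (sF n i x)))"

definition twisting_function ::
  "(nat \<Rightarrow> 'g monoid) \<Rightarrow> (nat \<Rightarrow> nat \<Rightarrow> 'g \<Rightarrow> 'g) \<Rightarrow> (nat \<Rightarrow> nat \<Rightarrow> 'g \<Rightarrow> 'g) \<Rightarrow>
   (nat \<Rightarrow> 'b set) \<Rightarrow> (nat \<Rightarrow> nat \<Rightarrow> 'b \<Rightarrow> 'b) \<Rightarrow> (nat \<Rightarrow> nat \<Rightarrow> 'b \<Rightarrow> 'b) \<Rightarrow>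
   (nat \<Rightarrow> 'b \<Rightarrow> 'g) \<Rightarrow> bool"
  where "twisting_function G dG sG B dB sB tau \<longleftrightarrow>
    (\<forall>q. \<forall>b\<in>B q. 0 < q \<longrightarrow> tau q b \<in> carrier (G (q - 1))) \<and>
    (\<forall>q. \<forall>b\<in>B q. 1 < q \<longrightarrow>
        dG (q - 1) 0 (tau q b) =
          inv\<^bsub>G (q - 2)\<^esub> (tau (q - 1) (dB q 0 b)) \<otimes>\<^bsub>G (q - 2)\<^esub> tau (q - 1) (dB q 1 b)) \<and>
    (\<forall>q i. \<forall>b\<in>B q. 1 < q \<and> 1 \<le> i \<and> Suc i \<le> q \<longrightarrow>
        tau (q - 1) (dB q (Suc i) b) = dG (q - 1) i (tau q b)) \<and>
    (\<forall>q i. \<forall>b\<in>B q. 0 < q \<and> i < q \<longrightarrow>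
        tau (Suc q) (sB q (Suc i) b) = sG (q - 1) i (tau q b)) \<and>
    (\<forall>q. \<forall>b\<in>B q. tau (Suc q) (sB q 0 b) = \<one>\<^bsub>G q\<^esub>)"

definition tcp_set :: "(nat \<Rightarrow> 'f set) \<Rightarrow> (nat \<Rightarrow> 'b set) \<Rightarrow> nat \<Rightarrow> ('f \<times> 'b) set"
  where "tcp_set F B n = F n \<times> B n"

definition tcp_face ::
  "(nat \<Rightarrow> 'g \<Rightarrow> 'f \<Rightarrow> 'f) \<Rightarrow> (nat \<Rightarrow> 'b \<Rightarrow> 'g) \<Rightarrow> (nat \<Rightarrow> nat \<Rightarrow> 'f \<Rightarrow> 'f) \<Rightarrow>
   (nat \<Rightarrow> nat \<Rightarrow> 'b \<Rightarrow> 'b) \<Rightarrow> nat \<Rightarrow> nat \<Rightarrow> 'f \<times> 'b \<Rightarrow> 'f \<times> 'b"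
  where "tcp_face act tau dF dB n i = (\<lambda>(f, b).
     if i = 0 then (act (n - 1) (tau n b) (dF n 0 f), dB n 0 b) else (dF n i f, dB n i b))"

definition tcp_degen ::
  "(nat \<Rightarrow> nat \<Rightarrow> 'f \<Rightarrow> 'f) \<Rightarrow> (nat \<Rightarrow> nat \<Rightarrow> 'b \<Rightarrow> 'b) \<Rightarrow> nat \<Rightarrow> nat \<Rightarrow> 'f \<times> 'b \<Rightarrow> 'f \<times> 'b"
  where "tcp_degen sF sB n i = (\<lambda>(f, b). (sF n i f, sB n i b))"

text \<open>Polynomial ring over R in the variables V (monomials = multisets of
  variables, polynomials = finitely supported coefficient functions).\<close>

definition poly_ring :: "('r, 'm) ring_scheme \<Rightarrow> 'v set \<Rightarrow> ('v multiset \<Rightarrow> 'r) ring"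
  where "poly_ring R V =
    \<lparr>carrier = {P. (\<forall>m. P m \<in> carrier R) \<and> finite {m. P m \<noteq> \<zero>\<^bsub>R\<^esub>} \<and>
                   (\<forall>m. P m \<noteq> \<zero>\<^bsub>R\<^esub> \<longrightarrow> set_mset m \<subseteq> V)},
     Group.monoid.mult = (\<lambda>P Q m. finsum R (\<lambda>m1. P m1 \<otimes>\<^bsub>R\<^esub> Q (m - m1)) {m1. m1 \<subseteq># m}),
     Group.monoid.one = (\<lambda>m. if m = {#} then \<one>\<^bsub>R\<^esub> else \<zero>\<^bsub>R\<^esub>),
     Ring.ring.zero = (\<lambda>m. \<zero>\<^bsub>R\<^esub>),
     Ring.ring.add = (\<lambda>P Q m. P m \<oplus>\<^bsub>R\<^esub> Q m)\<rparr>"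

definition pvar :: "('r, 'm) ring_scheme \<Rightarrow> 'v \<Rightarrow> ('v multiset \<Rightarrow> 'r)"
  where "pvar R v = (\<lambda>m. if m = {#v#} then \<one>\<^bsub>R\<^esub> else \<zero>\<^bsub>R\<^esub>)"

definition pconst :: "('r, 'm) ring_scheme \<Rightarrow> 'r \<Rightarrow> ('v multiset \<Rightarrow> 'r)"
  where "pconst R r = (\<lambda>m. if m = {#} then r else \<zero>\<^bsub>R\<^esub>)"

text \<open>Relations making the polynomial ring on the symbols (i, a), i in I, a in A,
  into the tensor product over R of copies of A indexed by I
  (the coproduct of commutative R-algebras): each i-th factor map a -> (i,a)
  is a unital ring homomorphism compatible with the structure maps from R.\<close>
definition tensor_rels :: "('r, 'm) ring_scheme \<Rightarrow> ('a, 'n) ring_scheme \<Rightarrow> ('r \<Rightarrow> 'a) \<Rightarrow> 'i set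
    \<Rightarrow> (('i \<times> 'a) multiset \<Rightarrow> 'r) set"
  where "tensor_rels R A eta I =
    (let P = poly_ring R (I \<times> carrier A) in
     {pvar R (i, a \<oplus>\<^bsub>A\<^esub> b) \<ominus>\<^bsub>P\<^esub> (pvar R (i, a) \<oplus>\<^bsub>P\<^esub> pvar R (i, b)) | i a b.
        i \<in> I \<and> a \<in> carrier A \<and> b \<in> carrier A} \<union>
     {pvar R (i, a \<otimes>\<^bsub>A\<^esub> b) \<ominus>\<^bsub>P\<^esub> (pvar R (i, a) \<otimes>\<^bsub>P\<^esub> pvar R (i, b)) | i a b.
        i \<in> I \<and> a \<in> carrier A \<and> b \<in> carrier A} \<union>
     {pvar R (i, \<one>\<^bsub>A\<^esub>) \<ominus>\<^bsub>P\<^esub> \<one>\<^bsub>P\<^esub> | i. i \<in> I} \<union>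
     {pvar R (i, eta r) \<ominus>\<^bsub>P\<^esub> pconst R r | i r. i \<in> I \<and> r \<in> carrier R})"

definition tensor_ideal :: "('r, 'm) ring_scheme \<Rightarrow> ('a, 'n) ring_scheme \<Rightarrow> ('r \<Rightarrow> 'a) \<Rightarrow> 'i set
    \<Rightarrow> (('i \<times> 'a) multiset \<Rightarrow> 'r) set"
  where "tensor_ideal R A eta I = genideal (poly_ring R (I \<times> carrier A)) (tensor_rels R A eta I)"

definition tensor :: "('r, 'm) ring_scheme \<Rightarrow> ('a, 'n) ring_scheme \<Rightarrow> ('r \<Rightarrow> 'a) \<Rightarrow> 'i set
    \<Rightarrow> (('i \<times> 'a) multiset \<Rightarrow> 'r) set ring"
  where "tensor R A eta I = poly_ring R (I \<times> carrier A) Quot tensor_ideal R A eta I"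

text \<open>The element a placed in the i-th tensor factor (1 elsewhere).\<close>
definition tgen :: "('r, 'm) ring_scheme \<Rightarrow> ('a, 'n) ring_scheme \<Rightarrow> ('r \<Rightarrow> 'a) \<Rightarrow> 'i set
    \<Rightarrow> 'i \<Rightarrow> 'a \<Rightarrow> (('i \<times> 'a) multiset \<Rightarrow> 'r) set"
  where "tgen R A eta I i a =
    tensor_ideal R A eta I +>\<^bsub>poly_ring R (I \<times> carrier A)\<^esub> pvar R (i, a)"

definition tunit :: "('r, 'm) ring_scheme \<Rightarrow> ('a, 'n) ring_scheme \<Rightarrow> ('r \<Rightarrow> 'a) \<Rightarrow> 'i set
    \<Rightarrow> 'r \<Rightarrow> (('i \<times> 'a) multiset \<Rightarrow> 'r) set"
  where "tunit R A eta I r =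
    tensor_ideal R A eta I +>\<^bsub>poly_ring R (I \<times> carrier A)\<^esub> pconst R r"

definition prename :: "('r, 'm) ring_scheme \<Rightarrow> ('v \<Rightarrow> 'w) \<Rightarrow> ('v multiset \<Rightarrow> 'r) \<Rightarrow> ('w multiset \<Rightarrow> 'r)"
  where "prename R sigma P = (\<lambda>m'. finsum R P {m. image_mset sigma m = m' \<and> P m \<noteq> \<zero>\<^bsub>R\<^esub>})"

text \<open>The R-algebra map between tensor products induced on monomials by sending the
  symbol (i,a) to sigma (i,a); i.e. the multiplicative extension of
  a in factor i |-> (second component) in factor (first component), with empty
  products equal to 1.  Defined on cosets via a representative.\<close>
definition tmap :: "('r, 'm) ring_scheme \<Rightarrow> ('a2, 'n) ring_scheme \<Rightarrow> ('r \<Rightarrow> 'a2) \<Rightarrow> 'j set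
    \<Rightarrow> ('i \<times> 'a \<Rightarrow> 'j \<times> 'a2) \<Rightarrow> (('i \<times> 'a) multiset \<Rightarrow> 'r) set \<Rightarrow> (('j \<times> 'a2) multiset \<Rightarrow> 'r) set"
  where "tmap R A' eta' J sigma C =
    tensor_ideal R A' eta' J +>\<^bsub>poly_ring R (J \<times> carrier A')\<^esub> prename R sigma (SOME p. p \<in> C)"

definition loday :: "('r, 'm) ring_scheme \<Rightarrow> ('a, 'n) ring_scheme \<Rightarrow> ('r \<Rightarrow> 'a) \<Rightarrow> (nat \<Rightarrow> 'x set)
    \<Rightarrow> nat \<Rightarrow> (('x \<times> 'a) multiset \<Rightarrow> 'r) set ring"
  where "loday R A eta Xs n = tensor R A eta (Xs n)"

definition loday_face :: "('r, 'm) ring_scheme \<Rightarrow> ('a, 'n) ring_scheme \<Rightarrow> ('r \<Rightarrow> 'a) \<Rightarrow> (nat \<Rightarrow> 'x set)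
    \<Rightarrow> (nat \<Rightarrow> nat \<Rightarrow> 'x \<Rightarrow> 'x) \<Rightarrow> nat \<Rightarrow> nat
    \<Rightarrow> (('x \<times> 'a) multiset \<Rightarrow> 'r) set \<Rightarrow> (('x \<times> 'a) multiset \<Rightarrow> 'r) set"
  where "loday_face R A eta Xs d n i = tmap R A eta (Xs (n - 1)) (\<lambda>(x, a). (d n i x, a))"

definition loday_degen :: "('r, 'm) ring_scheme \<Rightarrow> ('a, 'n) ring_scheme \<Rightarrow> ('r \<Rightarrow> 'a) \<Rightarrow> (nat \<Rightarrow> 'x set)
    \<Rightarrow> (nat \<Rightarrow> nat \<Rightarrow> 'x \<Rightarrow> 'x) \<Rightarrow> nat \<Rightarrow> nat
    \<Rightarrow> (('x \<times> 'a) multiset \<Rightarrow> 'r) set \<Rightarrow> (('x \<times> 'a) multiset \<Rightarrow> 'r) set"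
  where "loday_degen R A eta Xs s n i = tmap R A eta (Xs (Suc n)) (\<lambda>(x, a). (s n i x, a))"

text \<open>Left action of G on L_F(A): g . (tensor of a_f) = tensor of a_{g^-1 f},
  i.e. the element in factor f is moved to factor g f.\<close>
definition loday_act :: "('r, 'm) ring_scheme \<Rightarrow> ('a, 'n) ring_scheme \<Rightarrow> ('r \<Rightarrow> 'a) \<Rightarrow> (nat \<Rightarrow> 'f set)
    \<Rightarrow> (nat \<Rightarrow> 'g \<Rightarrow> 'f \<Rightarrow> 'f) \<Rightarrow> nat \<Rightarrow> 'g
    \<Rightarrow> (('f \<times> 'a) multiset \<Rightarrow> 'r) set \<Rightarrow> (('f \<times> 'a) multiset \<Rightarrow> 'r) set"
  where "loday_act R A eta F act n g = tmap R A eta (F n) (\<lambda>(f, a). (act n g f, a))"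

definition twloday :: "('r, 'm) ring_scheme \<Rightarrow> (nat \<Rightarrow> ('c, 'n) ring_scheme) \<Rightarrow> (nat \<Rightarrow> 'r \<Rightarrow> 'c)
    \<Rightarrow> (nat \<Rightarrow> 'b set) \<Rightarrow> nat \<Rightarrow> (('b \<times> 'c) multiset \<Rightarrow> 'r) set ring"
  where "twloday R C etaC B n = tensor R (C n) (etaC n) (B n)"

definition twloday_face :: "('r, 'm) ring_scheme \<Rightarrow> (nat \<Rightarrow> ('c, 'n) ring_scheme) \<Rightarrow> (nat \<Rightarrow> 'r \<Rightarrow> 'c)
    \<Rightarrow> (nat \<Rightarrow> nat \<Rightarrow> 'c \<Rightarrow> 'c) \<Rightarrow> (nat \<Rightarrow> 'g \<Rightarrow> 'c \<Rightarrow> 'c)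
    \<Rightarrow> (nat \<Rightarrow> 'b set) \<Rightarrow> (nat \<Rightarrow> nat \<Rightarrow> 'b \<Rightarrow> 'b) \<Rightarrow> (nat \<Rightarrow> 'b \<Rightarrow> 'g) \<Rightarrow> nat \<Rightarrow> nat
    \<Rightarrow> (('b \<times> 'c) multiset \<Rightarrow> 'r) set \<Rightarrow> (('b \<times> 'c) multiset \<Rightarrow> 'r) set"
  where "twloday_face R C etaC dC actC B dB tau n i =
    (if i = 0 then tmap R (C (n - 1)) (etaC (n - 1)) (B (n - 1))
                     (\<lambda>(b, c). (dB n 0 b, actC (n - 1) (tau n b) (dC n 0 c)))
     else tmap R (C (n - 1)) (etaC (n - 1)) (B (n - 1)) (\<lambda>(b, c). (dB n i b, dC n i c)))"

definition twloday_degen :: "('r, 'm) ring_scheme \<Rightarrow> (nat \<Rightarrow> ('c, 'n) ring_scheme) \<Rightarrow> (nat \<Rightarrow> 'r \<Rightarrow> 'c)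
    \<Rightarrow> (nat \<Rightarrow> nat \<Rightarrow> 'c \<Rightarrow> 'c) \<Rightarrow> (nat \<Rightarrow> 'b set) \<Rightarrow> (nat \<Rightarrow> nat \<Rightarrow> 'b \<Rightarrow> 'b) \<Rightarrow> nat \<Rightarrow> nat
    \<Rightarrow> (('b \<times> 'c) multiset \<Rightarrow> 'r) set \<Rightarrow> (('b \<times> 'c) multiset \<Rightarrow> 'r) set"
  where "twloday_degen R C etaC sC B sB n i =
    tmap R (C (Suc n)) (etaC (Suc n)) (B (Suc n)) (\<lambda>(b, c). (sB n i b, sC n i c))"

end

theory Submission
  imports Defs
begin


lemma finite_submsets: "finite {m1. m1 \<subseteq># (m::'v multiset)}"
proof -
  have "{m1. m1 \<subseteq># m} \<subseteq> mset ` {ys. set ys \<subseteq> set_mset m \<and> length ys \<le> size m}"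
  proof
    fix m1 assume "m1 \<in> {m1. m1 \<subseteq># m}"
    hence s: "m1 \<subseteq># m" by simp
    obtain ys where ys: "m1 = mset ys" using ex_mset by metis
    have "set ys \<subseteq> set_mset m" using s ys by (metis mset_subset_eqD set_mset_mset subsetI)
    moreover have "length ys \<le> size m" using s ys by (metis size_mset size_mset_mono)
    ultimately show "m1 \<in> mset ` {ys. set ys \<subseteq> set_mset m \<and> length ys \<le> size m}" using ys by blast
  qed
  moreover have "finite {ys. set ys \<subseteq> set_mset m \<and> length ys \<le> size m}"
    using finite_lists_length_le by blast
  ultimately show ?thesis by (meson finite_imageI finite_subset)
qed

definition pmono :: "('r,'m) ring_scheme \<Rightarrow> 'r \<Rightarrow> 'v multiset \<Rightarrow> ('v multiset \<Rightarrow> 'r)"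
  where "pmono R r a = (\<lambda>m. if m = a then r else \<zero>\<^bsub>R\<^esub>)"

context cring
begin

lemma poly_carrier: "P \<in> carrier (poly_ring R V) \<longleftrightarrow>
  (\<forall>m. P m \<in> carrier R) \<and> finite {m. P m \<noteq> \<zero>} \<and> (\<forall>m. P m \<noteq> \<zero> \<longrightarrow> set_mset m \<subseteq> V)"
  by (simp add: poly_ring_def)

lemma poly_add: "P \<oplus>\<^bsub>poly_ring R V\<^esub> Q = (\<lambda>m. P m \<oplus> Q m)"
  by (simp add: poly_ring_def)
lemma poly_zero: "\<zero>\<^bsub>poly_ring R V\<^esub> = (\<lambda>m. \<zero>)"
  by (simp add: poly_ring_def)
lemma poly_one: "\<one>\<^bsub>poly_ring R V\<^esub> = pmono R \<one> {#}"
  by (simp add: poly_ring_def pmono_def)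
lemma poly_mult: "P \<otimes>\<^bsub>poly_ring R V\<^esub> Q = (\<lambda>m. \<Oplus>m1\<in>{m1. m1 \<subseteq># m}. P m1 \<otimes> Q (m - m1))"
  by (simp add: poly_ring_def)

lemma pvar_pmono: "pvar R x = pmono R \<one> {#x#}"
  by (simp add: pvar_def pmono_def)
lemma pconst_pmono: "pconst R r = pmono R r {#}"
  by (simp add: pconst_def pmono_def)

lemma finsum_nonzero_term:
  assumes "f \<in> A \<rightarrow> carrier R" "(\<Oplus>i\<in>A. f i) \<noteq> \<zero>"
  shows "\<exists>i\<in>A. f i \<noteq> \<zero>"
proof (rule ccontr)
  assume "\<not> ?thesis"
  hence "(\<Oplus>i\<in>A. f i) = (\<Oplus>i\<in>A. \<zero>)" by (intro finsum_cong') auto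
  thus False using assms by simp
qed

lemma finsum_if_eq:
  assumes "finite A" "c \<in> carrier R"
  shows "(\<Oplus>x\<in>A. if x = a then c else \<zero>) = (if a \<in> A then c else \<zero>)"
proof (cases "a \<in> A")
  case True
  thus ?thesis using add.finprod_singleton_swap[of a A "\<lambda>_. c"] assms by simp
next
  case False
  hence "(\<Oplus>x\<in>A. if x = a then c else \<zero>) = (\<Oplus>x\<in>A. \<zero>)" by (intro finsum_cong') auto
  thus ?thesis using False by simp
qed

lemma pmono_carrier: "r \<in> carrier R \<Longrightarrow> (r \<noteq> \<zero> \<Longrightarrow> set_mset a \<subseteq> V) \<Longrightarrow> pmono R r a \<in> carrier (poly_ring R V)"
proof -
  assume r: "r \<in> carrier R" and v: "(r \<noteq> \<zero> \<Longrightarrow> set_mset a \<subseteq> V)"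
  have "{m. pmono R r a m \<noteq> \<zero>} \<subseteq> {a}" by (auto simp: pmono_def)
  hence "finite {m. pmono R r a m \<noteq> \<zero>}" by (rule finite_subset) simp
  thus ?thesis using r v by (auto simp: poly_carrier pmono_def)
qed

lemma poly_abelian_group: "abelian_group (poly_ring R V)"
proof (rule abelian_groupI)
  fix x y assume x: "x \<in> carrier (poly_ring R V)" and y: "y \<in> carrier (poly_ring R V)"
  have "{m. x m \<oplus> y m \<noteq> \<zero>} \<subseteq> {m. x m \<noteq> \<zero>} \<union> {m. y m \<noteq> \<zero>}" using x y by (auto simp: poly_carrier)
  moreover have "finite {m. x m \<noteq> \<zero>}" "finite {m. y m \<noteq> \<zero>}" using x y by (simp_all add: poly_carrier)
  ultimately have "finite {m. x m \<oplus> y m \<noteq> \<zero>}" by (meson finite_UnI finite_subset)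
  moreover have "\<forall>m. x m \<oplus> y m \<noteq> \<zero> \<longrightarrow> set_mset m \<subseteq> V"
    using x y by (metis l_zero poly_carrier)
  ultimately show "x \<oplus>\<^bsub>poly_ring R V\<^esub> y \<in> carrier (poly_ring R V)"
    using x y by (simp add: poly_carrier poly_add)
  show "x \<oplus>\<^bsub>poly_ring R V\<^esub> y = y \<oplus>\<^bsub>poly_ring R V\<^esub> x" using x y
    by (auto simp: poly_add poly_carrier add.m_comm)
  fix z assume z: "z \<in> carrier (poly_ring R V)"
  show "x \<oplus>\<^bsub>poly_ring R V\<^esub> y \<oplus>\<^bsub>poly_ring R V\<^esub> z = x \<oplus>\<^bsub>poly_ring R V\<^esub> (y \<oplus>\<^bsub>poly_ring R V\<^esub> z)"
    using x y z by (auto simp: poly_add poly_carrier add.m_assoc)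
next
  show "\<zero>\<^bsub>poly_ring R V\<^esub> \<in> carrier (poly_ring R V)" by (simp add: poly_carrier poly_zero)
next
  fix x assume x: "x \<in> carrier (poly_ring R V)"
  show "\<zero>\<^bsub>poly_ring R V\<^esub> \<oplus>\<^bsub>poly_ring R V\<^esub> x = x" using x by (auto simp: poly_add poly_zero poly_carrier)
  have "{m. \<ominus> x m \<noteq> \<zero>} = {m. x m \<noteq> \<zero>}" using x by (auto simp: poly_carrier)
  hence "(\<lambda>m. \<ominus> x m) \<in> carrier (poly_ring R V)" using x
    by (auto simp: poly_carrier)
  moreover have "(\<lambda>m. \<ominus> x m) \<oplus>\<^bsub>poly_ring R V\<^esub> x = \<zero>\<^bsub>poly_ring R V\<^esub>"
    using x by (auto simp: poly_add poly_zero poly_carrier l_neg)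
  ultimately show "\<exists>y\<in>carrier (poly_ring R V). y \<oplus>\<^bsub>poly_ring R V\<^esub> x = \<zero>\<^bsub>poly_ring R V\<^esub>" by blast
qed

lemma poly_mult_closed:
  assumes x: "x \<in> carrier (poly_ring R V)" and y: "y \<in> carrier (poly_ring R V)"
  shows "x \<otimes>\<^bsub>poly_ring R V\<^esub> y \<in> carrier (poly_ring R V)"
proof -
  let ?f = "\<lambda>m m1. x m1 \<otimes> y (m - m1)"
  have fc: "\<And>m. ?f m \<in> {m1. m1 \<subseteq># m} \<rightarrow> carrier R" using x y by (auto simp: poly_carrier)
  have nz: "\<exists>m1. m1 \<subseteq># m \<and> x m1 \<noteq> \<zero> \<and> y (m - m1) \<noteq> \<zero>" if nz0: "(\<Oplus>m1\<in>{m1. m1 \<subseteq># m}. ?f m m1) \<noteq> \<zero>" for m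
  proof -
    obtain m1 where "m1 \<subseteq># m" "?f m m1 \<noteq> \<zero>" using finsum_nonzero_term[OF fc nz0] by auto
    thus ?thesis using x y by (auto simp: poly_carrier)
  qed
  have "{m. (\<Oplus>m1\<in>{m1. m1 \<subseteq># m}. ?f m m1) \<noteq> \<zero>} \<subseteq> (\<lambda>(a, b). a + b) ` ({m. x m \<noteq> \<zero>} \<times> {m. y m \<noteq> \<zero>})"
  proof
    fix m assume "m \<in> {m. (\<Oplus>m1\<in>{m1. m1 \<subseteq># m}. ?f m m1) \<noteq> \<zero>}"
    then obtain m1 where "m1 \<subseteq># m" "x m1 \<noteq> \<zero>" "y (m - m1) \<noteq> \<zero>" using nz by blast
    thus "m \<in> (\<lambda>(a, b). a + b) ` ({m. x m \<noteq> \<zero>} \<times> {m. y m \<noteq> \<zero>})"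
      by (intro image_eqI[of _ _ "(m1, m - m1)"]) auto
  qed
  moreover have "finite ((\<lambda>(a, b). a + b) ` ({m. x m \<noteq> \<zero>} \<times> {m. y m \<noteq> \<zero>}))"
    using x y by (simp add: poly_carrier)
  ultimately have fin: "finite {m. (\<Oplus>m1\<in>{m1. m1 \<subseteq># m}. ?f m m1) \<noteq> \<zero>}" by (rule finite_subset)
  have vars: "set_mset m \<subseteq> V" if "(\<Oplus>m1\<in>{m1. m1 \<subseteq># m}. ?f m m1) \<noteq> \<zero>" for m
  proof -
    note nzm = nz[OF that]
    obtain m1 where m1: "m1 \<subseteq># m" "x m1 \<noteq> \<zero>" "y (m - m1) \<noteq> \<zero>" using nzm by blast
    have "m = m1 + (m - m1)" using m1 by simp
    hence "set_mset m = set_mset m1 \<union> set_mset (m - m1)" by (metis set_mset_union)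
    thus ?thesis using m1 x y by (auto simp: poly_carrier)
  qed
  show ?thesis using fin vars fc unfolding poly_mult poly_carrier
    by (auto intro!: finsum_closed)
qed

lemma pmono_mult:
  assumes "r \<in> carrier R" "s \<in> carrier R"
  shows "pmono R r a \<otimes>\<^bsub>poly_ring R V\<^esub> pmono R s b = pmono R (r \<otimes> s) (a + b)"
proof (rule ext)
  fix m
  have "(\<Oplus>m1\<in>{m1. m1 \<subseteq># m}. pmono R r a m1 \<otimes> pmono R s b (m - m1))
      = (\<Oplus>m1\<in>{m1. m1 \<subseteq># m}. if m1 = a then (if m = a + b then r \<otimes> s else \<zero>) else \<zero>)"
    using assms by (intro finsum_cong') (auto simp: pmono_def)
  also have "\<dots> = (if a \<in> {m1. m1 \<subseteq># m} then (if m = a + b then r \<otimes> s else \<zero>) else \<zero>)"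
    using assms by (intro finsum_if_eq) (auto simp: finite_submsets)
  also have "\<dots> = pmono R (r \<otimes> s) (a + b) m" by (auto simp: pmono_def)
  finally show "(pmono R r a \<otimes>\<^bsub>poly_ring R V\<^esub> pmono R s b) m = pmono R (r \<otimes> s) (a + b) m"
    by (simp add: poly_mult)
qed

lemma poly_l_one:
  assumes x: "x \<in> carrier (poly_ring R V)"
  shows "\<one>\<^bsub>poly_ring R V\<^esub> \<otimes>\<^bsub>poly_ring R V\<^esub> x = x"
proof (rule ext)
  fix m
  have "(\<Oplus>m1\<in>{m1. m1 \<subseteq># m}. pmono R \<one> {#} m1 \<otimes> x (m - m1))
      = (\<Oplus>m1\<in>{m1. m1 \<subseteq># m}. if m1 = {#} then x m else \<zero>)"
    using x by (intro finsum_cong') (auto simp: pmono_def poly_carrier)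
  also have "\<dots> = x m" using x by (subst finsum_if_eq) (auto simp: finite_submsets poly_carrier)
  finally show "(\<one>\<^bsub>poly_ring R V\<^esub> \<otimes>\<^bsub>poly_ring R V\<^esub> x) m = x m"
    by (simp add: poly_mult poly_one)
qed

lemma poly_l_zero:
  assumes x: "x \<in> carrier (poly_ring R V)"
  shows "\<zero>\<^bsub>poly_ring R V\<^esub> \<otimes>\<^bsub>poly_ring R V\<^esub> x = \<zero>\<^bsub>poly_ring R V\<^esub>"
    and "x \<otimes>\<^bsub>poly_ring R V\<^esub> \<zero>\<^bsub>poly_ring R V\<^esub> = \<zero>\<^bsub>poly_ring R V\<^esub>"
proof -
  have "(\<Oplus>m1\<in>{m1. m1 \<subseteq># m}. \<zero> \<otimes> x (m - m1)) = \<zero>" for m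
    using x by (subst finsum_cong'[where g = "\<lambda>_. \<zero>"]) (auto simp: poly_carrier)
  thus "\<zero>\<^bsub>poly_ring R V\<^esub> \<otimes>\<^bsub>poly_ring R V\<^esub> x = \<zero>\<^bsub>poly_ring R V\<^esub>"
    by (simp add: poly_mult poly_zero)
  have "(\<Oplus>m1\<in>{m1. m1 \<subseteq># m}. x m1 \<otimes> \<zero>) = \<zero>" for m
    using x by (subst finsum_cong'[where g = "\<lambda>_. \<zero>"]) (auto simp: poly_carrier)
  thus "x \<otimes>\<^bsub>poly_ring R V\<^esub> \<zero>\<^bsub>poly_ring R V\<^esub> = \<zero>\<^bsub>poly_ring R V\<^esub>"
    by (simp add: poly_mult poly_zero)
qed

lemma poly_l_distr:
  assumes x: "x \<in> carrier (poly_ring R V)" and y: "y \<in> carrier (poly_ring R V)" and z: "z \<in> carrier (poly_ring R V)"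
  shows "(x \<oplus>\<^bsub>poly_ring R V\<^esub> y) \<otimes>\<^bsub>poly_ring R V\<^esub> z = x \<otimes>\<^bsub>poly_ring R V\<^esub> z \<oplus>\<^bsub>poly_ring R V\<^esub> y \<otimes>\<^bsub>poly_ring R V\<^esub> z"
    and "z \<otimes>\<^bsub>poly_ring R V\<^esub> (x \<oplus>\<^bsub>poly_ring R V\<^esub> y) = z \<otimes>\<^bsub>poly_ring R V\<^esub> x \<oplus>\<^bsub>poly_ring R V\<^esub> z \<otimes>\<^bsub>poly_ring R V\<^esub> y"
proof -
  have "(\<Oplus>m1\<in>{m1. m1 \<subseteq># m}. (x m1 \<oplus> y m1) \<otimes> z (m - m1)) =
        (\<Oplus>m1\<in>{m1. m1 \<subseteq># m}. x m1 \<otimes> z (m - m1)) \<oplus> (\<Oplus>m1\<in>{m1. m1 \<subseteq># m}. y m1 \<otimes> z (m - m1))" for m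
    using x y z by (subst finsum_addf[symmetric]) (auto intro!: finsum_cong' simp: poly_carrier l_distr)
  thus "(x \<oplus>\<^bsub>poly_ring R V\<^esub> y) \<otimes>\<^bsub>poly_ring R V\<^esub> z = x \<otimes>\<^bsub>poly_ring R V\<^esub> z \<oplus>\<^bsub>poly_ring R V\<^esub> y \<otimes>\<^bsub>poly_ring R V\<^esub> z"
    by (simp add: poly_mult poly_add)
  have "(\<Oplus>m1\<in>{m1. m1 \<subseteq># m}. z m1 \<otimes> (x (m - m1) \<oplus> y (m - m1))) =
        (\<Oplus>m1\<in>{m1. m1 \<subseteq># m}. z m1 \<otimes> x (m - m1)) \<oplus> (\<Oplus>m1\<in>{m1. m1 \<subseteq># m}. z m1 \<otimes> y (m - m1))" for m
    using x y z by (subst finsum_addf[symmetric]) (auto intro!: finsum_cong' simp: poly_carrier r_distr)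
  thus "z \<otimes>\<^bsub>poly_ring R V\<^esub> (x \<oplus>\<^bsub>poly_ring R V\<^esub> y) = z \<otimes>\<^bsub>poly_ring R V\<^esub> x \<oplus>\<^bsub>poly_ring R V\<^esub> z \<otimes>\<^bsub>poly_ring R V\<^esub> y"
    by (simp add: poly_mult poly_add)
qed


lemma poly_induct:
  assumes P: "P \<in> carrier (poly_ring R V)"
    and zero: "Phi (\<zero>\<^bsub>poly_ring R V\<^esub>)"
    and mono: "\<And>r a. r \<in> carrier R \<Longrightarrow> r \<noteq> \<zero> \<Longrightarrow> set_mset a \<subseteq> V \<Longrightarrow> Phi (pmono R r a)"
    and add: "\<And>P Q. P \<in> carrier (poly_ring R V) \<Longrightarrow> Q \<in> carrier (poly_ring R V) \<Longrightarrow> Phi P \<Longrightarrow> Phi Q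
               \<Longrightarrow> Phi (P \<oplus>\<^bsub>poly_ring R V\<^esub> Q)"
  shows "Phi P"
proof -
  have "\<forall>P. P \<in> carrier (poly_ring R V) \<longrightarrow> card {m. P m \<noteq> \<zero>} = n \<longrightarrow> Phi P" for n
  proof (induction n rule: less_induct)
    case (less n)
    show ?case
    proof (intro allI impI)
      fix P assume P: "P \<in> carrier (poly_ring R V)" and n: "card {m. P m \<noteq> \<zero>} = n"
      have fin: "finite {m. P m \<noteq> \<zero>}" using P by (simp add: poly_carrier)
      show "Phi P"
      proof (cases "{m. P m \<noteq> \<zero>} = {}")
        case True
        hence "P = \<zero>\<^bsub>poly_ring R V\<^esub>" by (auto simp: poly_zero)
        thus ?thesis using zero by simp
      next
        case False
        then obtain a where a: "P a \<noteq> \<zero>" by auto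
        define P' where "P' = P(a := \<zero>)"
        have P': "P' \<in> carrier (poly_ring R V)" using P fin unfolding P'_def poly_carrier
          by (auto elim: finite_subset[rotated])
        have "{m. P' m \<noteq> \<zero>} = {m. P m \<noteq> \<zero>} - {a}" by (auto simp: P'_def)
        moreover have "card {m. P m \<noteq> \<zero>} > 0" using a fin by (auto simp: card_gt_0_iff)
        ultimately have "card {m. P' m \<noteq> \<zero>} < n" using a fin n by (simp add: card_Diff1_less)
        hence "Phi P'" using less P' by blast
        moreover have "P a \<in> carrier R" "set_mset a \<subseteq> V" using P a by (auto simp: poly_carrier)
        moreover have "pmono R (P a) a \<in> carrier (poly_ring R V)" using calculation by (intro pmono_carrier) auto
        moreover have "P = pmono R (P a) a \<oplus>\<^bsub>poly_ring R V\<^esub> P'"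
          using P by (auto simp: poly_add pmono_def P'_def poly_carrier)
        ultimately show ?thesis using add[of "pmono R (P a) a" P'] mono[of "P a" a] a P' by metis
      qed
    qed
  qed
  thus ?thesis using P by blast
qed

lemma poly_m_comm:
  assumes x: "x \<in> carrier (poly_ring R V)" and y: "y \<in> carrier (poly_ring R V)"
  shows "x \<otimes>\<^bsub>poly_ring R V\<^esub> y = y \<otimes>\<^bsub>poly_ring R V\<^esub> x"
proof -
  have "\<forall>y\<in>carrier (poly_ring R V). x \<otimes>\<^bsub>poly_ring R V\<^esub> y = y \<otimes>\<^bsub>poly_ring R V\<^esub> x"
  proof (rule poly_induct[OF x])
    show "\<forall>y\<in>carrier (poly_ring R V). \<zero>\<^bsub>poly_ring R V\<^esub> \<otimes>\<^bsub>poly_ring R V\<^esub> y = y \<otimes>\<^bsub>poly_ring R V\<^esub> \<zero>\<^bsub>poly_ring R V\<^esub>"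
      by (simp add: poly_l_zero)
  next
    fix r a assume ra: "r \<in> carrier R" "r \<noteq> \<zero>" "set_mset a \<subseteq> V"
    have pc: "pmono R r a \<in> carrier (poly_ring R V)" using ra by (intro pmono_carrier) auto
    show "\<forall>y\<in>carrier (poly_ring R V). pmono R r a \<otimes>\<^bsub>poly_ring R V\<^esub> y = y \<otimes>\<^bsub>poly_ring R V\<^esub> pmono R r a"
    proof
      fix y assume y: "y \<in> carrier (poly_ring R V)"
      show "pmono R r a \<otimes>\<^bsub>poly_ring R V\<^esub> y = y \<otimes>\<^bsub>poly_ring R V\<^esub> pmono R r a"
      proof (rule poly_induct[OF y])
        show "pmono R r a \<otimes>\<^bsub>poly_ring R V\<^esub> \<zero>\<^bsub>poly_ring R V\<^esub> = \<zero>\<^bsub>poly_ring R V\<^esub> \<otimes>\<^bsub>poly_ring R V\<^esub> pmono R r a"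
          using pc by (simp add: poly_l_zero)
      next
        fix s b assume "s \<in> carrier R"
        thus "pmono R r a \<otimes>\<^bsub>poly_ring R V\<^esub> pmono R s b = pmono R s b \<otimes>\<^bsub>poly_ring R V\<^esub> pmono R r a"
          using ra by (simp add: pmono_mult m_comm ab_semigroup_add_class.add.commute)
      next
        fix P Q assume "P \<in> carrier (poly_ring R V)" "Q \<in> carrier (poly_ring R V)"
          "pmono R r a \<otimes>\<^bsub>poly_ring R V\<^esub> P = P \<otimes>\<^bsub>poly_ring R V\<^esub> pmono R r a"
          "pmono R r a \<otimes>\<^bsub>poly_ring R V\<^esub> Q = Q \<otimes>\<^bsub>poly_ring R V\<^esub> pmono R r a"
        thus "pmono R r a \<otimes>\<^bsub>poly_ring R V\<^esub> (P \<oplus>\<^bsub>poly_ring R V\<^esub> Q) = (P \<oplus>\<^bsub>poly_ring R V\<^esub> Q) \<otimes>\<^bsub>poly_ring R V\<^esub> pmono R r a"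
          using pc by (simp add: poly_l_distr)
      qed
    qed
  next
    fix P Q assume "P \<in> carrier (poly_ring R V)" "Q \<in> carrier (poly_ring R V)"
      "\<forall>y\<in>carrier (poly_ring R V). P \<otimes>\<^bsub>poly_ring R V\<^esub> y = y \<otimes>\<^bsub>poly_ring R V\<^esub> P"
      "\<forall>y\<in>carrier (poly_ring R V). Q \<otimes>\<^bsub>poly_ring R V\<^esub> y = y \<otimes>\<^bsub>poly_ring R V\<^esub> Q"
    thus "\<forall>y\<in>carrier (poly_ring R V). (P \<oplus>\<^bsub>poly_ring R V\<^esub> Q) \<otimes>\<^bsub>poly_ring R V\<^esub> y = y \<otimes>\<^bsub>poly_ring R V\<^esub> (P \<oplus>\<^bsub>poly_ring R V\<^esub> Q)"
      by (simp add: poly_l_distr)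
  qed
  thus ?thesis using y by blast
qed

lemma poly_m_assoc:
  assumes x: "x \<in> carrier (poly_ring R V)" and y: "y \<in> carrier (poly_ring R V)" and z: "z \<in> carrier (poly_ring R V)"
  shows "(x \<otimes>\<^bsub>poly_ring R V\<^esub> y) \<otimes>\<^bsub>poly_ring R V\<^esub> z = x \<otimes>\<^bsub>poly_ring R V\<^esub> (y \<otimes>\<^bsub>poly_ring R V\<^esub> z)"
proof -
  let ?P = "poly_ring R V"
  note cl = poly_mult_closed abelian_monoid.a_closed[OF abelian_group.axioms(1)[OF poly_abelian_group]]
    abelian_monoid.zero_closed[OF abelian_group.axioms(1)[OF poly_abelian_group]]
  have "\<forall>y\<in>carrier ?P. \<forall>z\<in>carrier ?P. (x \<otimes>\<^bsub>?P\<^esub> y) \<otimes>\<^bsub>?P\<^esub> z = x \<otimes>\<^bsub>?P\<^esub> (y \<otimes>\<^bsub>?P\<^esub> z)"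
  proof (rule poly_induct[OF x])
    show "\<forall>y\<in>carrier ?P. \<forall>z\<in>carrier ?P. (\<zero>\<^bsub>?P\<^esub> \<otimes>\<^bsub>?P\<^esub> y) \<otimes>\<^bsub>?P\<^esub> z = \<zero>\<^bsub>?P\<^esub> \<otimes>\<^bsub>?P\<^esub> (y \<otimes>\<^bsub>?P\<^esub> z)"
      by (simp add: poly_l_zero cl)
  next
    fix r a assume ra: "r \<in> carrier R" "r \<noteq> \<zero>" "set_mset a \<subseteq> V"
    have pc: "pmono R r a \<in> carrier ?P" using ra by (intro pmono_carrier) auto
    show "\<forall>y\<in>carrier ?P. \<forall>z\<in>carrier ?P. (pmono R r a \<otimes>\<^bsub>?P\<^esub> y) \<otimes>\<^bsub>?P\<^esub> z = pmono R r a \<otimes>\<^bsub>?P\<^esub> (y \<otimes>\<^bsub>?P\<^esub> z)"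
    proof (intro ballI)
      fix y z assume y: "y \<in> carrier ?P" and z: "z \<in> carrier ?P"
      have "\<forall>z\<in>carrier ?P. (pmono R r a \<otimes>\<^bsub>?P\<^esub> y) \<otimes>\<^bsub>?P\<^esub> z = pmono R r a \<otimes>\<^bsub>?P\<^esub> (y \<otimes>\<^bsub>?P\<^esub> z)"
      proof (rule poly_induct[OF y])
        show "\<forall>z\<in>carrier ?P. (pmono R r a \<otimes>\<^bsub>?P\<^esub> \<zero>\<^bsub>?P\<^esub>) \<otimes>\<^bsub>?P\<^esub> z = pmono R r a \<otimes>\<^bsub>?P\<^esub> (\<zero>\<^bsub>?P\<^esub> \<otimes>\<^bsub>?P\<^esub> z)"
          using pc by (simp add: poly_l_zero cl)
      next
        fix s b assume sb: "s \<in> carrier R" "s \<noteq> \<zero>" "set_mset b \<subseteq> V"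
        have pc2: "pmono R s b \<in> carrier ?P" using sb by (intro pmono_carrier) auto
        show "\<forall>z\<in>carrier ?P. (pmono R r a \<otimes>\<^bsub>?P\<^esub> pmono R s b) \<otimes>\<^bsub>?P\<^esub> z = pmono R r a \<otimes>\<^bsub>?P\<^esub> (pmono R s b \<otimes>\<^bsub>?P\<^esub> z)"
        proof
          fix z assume z: "z \<in> carrier ?P"
          show "(pmono R r a \<otimes>\<^bsub>?P\<^esub> pmono R s b) \<otimes>\<^bsub>?P\<^esub> z = pmono R r a \<otimes>\<^bsub>?P\<^esub> (pmono R s b \<otimes>\<^bsub>?P\<^esub> z)"
          proof (rule poly_induct[OF z])
            show "(pmono R r a \<otimes>\<^bsub>?P\<^esub> pmono R s b) \<otimes>\<^bsub>?P\<^esub> \<zero>\<^bsub>?P\<^esub> = pmono R r a \<otimes>\<^bsub>?P\<^esub> (pmono R s b \<otimes>\<^bsub>?P\<^esub> \<zero>\<^bsub>?P\<^esub>)"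
              using pc pc2 by (simp add: poly_l_zero cl)
          next
            fix t c assume "t \<in> carrier R"
            thus "(pmono R r a \<otimes>\<^bsub>?P\<^esub> pmono R s b) \<otimes>\<^bsub>?P\<^esub> pmono R t c = pmono R r a \<otimes>\<^bsub>?P\<^esub> (pmono R s b \<otimes>\<^bsub>?P\<^esub> pmono R t c)"
              using ra sb by (simp add: pmono_mult m_assoc semigroup_add_class.add.assoc)
          next
            fix P Q assume "P \<in> carrier ?P" "Q \<in> carrier ?P"
              "(pmono R r a \<otimes>\<^bsub>?P\<^esub> pmono R s b) \<otimes>\<^bsub>?P\<^esub> P = pmono R r a \<otimes>\<^bsub>?P\<^esub> (pmono R s b \<otimes>\<^bsub>?P\<^esub> P)"
              "(pmono R r a \<otimes>\<^bsub>?P\<^esub> pmono R s b) \<otimes>\<^bsub>?P\<^esub> Q = pmono R r a \<otimes>\<^bsub>?P\<^esub> (pmono R s b \<otimes>\<^bsub>?P\<^esub> Q)"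
            thus "(pmono R r a \<otimes>\<^bsub>?P\<^esub> pmono R s b) \<otimes>\<^bsub>?P\<^esub> (P \<oplus>\<^bsub>?P\<^esub> Q) = pmono R r a \<otimes>\<^bsub>?P\<^esub> (pmono R s b \<otimes>\<^bsub>?P\<^esub> (P \<oplus>\<^bsub>?P\<^esub> Q))"
              using pc pc2 by (simp add: poly_l_distr cl)
          qed
        qed
      next
        fix P Q assume "P \<in> carrier ?P" "Q \<in> carrier ?P"
          "\<forall>z\<in>carrier ?P. (pmono R r a \<otimes>\<^bsub>?P\<^esub> P) \<otimes>\<^bsub>?P\<^esub> z = pmono R r a \<otimes>\<^bsub>?P\<^esub> (P \<otimes>\<^bsub>?P\<^esub> z)"
          "\<forall>z\<in>carrier ?P. (pmono R r a \<otimes>\<^bsub>?P\<^esub> Q) \<otimes>\<^bsub>?P\<^esub> z = pmono R r a \<otimes>\<^bsub>?P\<^esub> (Q \<otimes>\<^bsub>?P\<^esub> z)"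
        thus "\<forall>z\<in>carrier ?P. (pmono R r a \<otimes>\<^bsub>?P\<^esub> (P \<oplus>\<^bsub>?P\<^esub> Q)) \<otimes>\<^bsub>?P\<^esub> z = pmono R r a \<otimes>\<^bsub>?P\<^esub> ((P \<oplus>\<^bsub>?P\<^esub> Q) \<otimes>\<^bsub>?P\<^esub> z)"
          using pc by (simp add: poly_l_distr cl)
      qed
      thus "(pmono R r a \<otimes>\<^bsub>?P\<^esub> y) \<otimes>\<^bsub>?P\<^esub> z = pmono R r a \<otimes>\<^bsub>?P\<^esub> (y \<otimes>\<^bsub>?P\<^esub> z)" using z by blast
    qed
  next
    fix P Q assume "P \<in> carrier ?P" "Q \<in> carrier ?P"
      "\<forall>y\<in>carrier ?P. \<forall>z\<in>carrier ?P. (P \<otimes>\<^bsub>?P\<^esub> y) \<otimes>\<^bsub>?P\<^esub> z = P \<otimes>\<^bsub>?P\<^esub> (y \<otimes>\<^bsub>?P\<^esub> z)"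
      "\<forall>y\<in>carrier ?P. \<forall>z\<in>carrier ?P. (Q \<otimes>\<^bsub>?P\<^esub> y) \<otimes>\<^bsub>?P\<^esub> z = Q \<otimes>\<^bsub>?P\<^esub> (y \<otimes>\<^bsub>?P\<^esub> z)"
    thus "\<forall>y\<in>carrier ?P. \<forall>z\<in>carrier ?P. ((P \<oplus>\<^bsub>?P\<^esub> Q) \<otimes>\<^bsub>?P\<^esub> y) \<otimes>\<^bsub>?P\<^esub> z = (P \<oplus>\<^bsub>?P\<^esub> Q) \<otimes>\<^bsub>?P\<^esub> (y \<otimes>\<^bsub>?P\<^esub> z)"
      by (simp add: poly_l_distr cl)
  qed
  thus ?thesis using y z by blast
qed

lemma poly_cring: "cring (poly_ring R V)"
proof (rule cringI)
  show "abelian_group (poly_ring R V)" by (rule poly_abelian_group)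
  show "Group.comm_monoid (poly_ring R V)"
  proof (rule comm_monoidI)
    show "\<one>\<^bsub>poly_ring R V\<^esub> \<in> carrier (poly_ring R V)" unfolding poly_one by (rule pmono_carrier) auto
  next
    fix x y z assume "x \<in> carrier (poly_ring R V)" "y \<in> carrier (poly_ring R V)" "z \<in> carrier (poly_ring R V)"
    thus "x \<otimes>\<^bsub>poly_ring R V\<^esub> y \<otimes>\<^bsub>poly_ring R V\<^esub> z = x \<otimes>\<^bsub>poly_ring R V\<^esub> (y \<otimes>\<^bsub>poly_ring R V\<^esub> z)"
      by (rule poly_m_assoc)
  next
    fix x y assume "x \<in> carrier (poly_ring R V)" "y \<in> carrier (poly_ring R V)"
    thus "x \<otimes>\<^bsub>poly_ring R V\<^esub> y = y \<otimes>\<^bsub>poly_ring R V\<^esub> x" by (rule poly_m_comm)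
  qed (auto simp: poly_mult_closed poly_l_one)
qed (simp add: poly_l_distr)

end


definition mprod :: "('s,'n) ring_scheme \<Rightarrow> ('v \<Rightarrow> 's) \<Rightarrow> 'v multiset \<Rightarrow> 's"
  where "mprod S v m = finprod S (\<lambda>x. v x [^]\<^bsub>S\<^esub> count m x) (set_mset m)"

definition peval :: "('r,'m) ring_scheme \<Rightarrow> ('s,'n) ring_scheme \<Rightarrow> ('r \<Rightarrow> 's) \<Rightarrow> ('v \<Rightarrow> 's)
    \<Rightarrow> ('v multiset \<Rightarrow> 'r) \<Rightarrow> 's"
  where "peval R S c v P = finsum S (\<lambda>m. c (P m) \<otimes>\<^bsub>S\<^esub> mprod S v m) {m. P m \<noteq> \<zero>\<^bsub>R\<^esub>}"

lemma mprod_superset: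
  assumes "cring S" "finite Xs" "set_mset m \<subseteq> Xs" "\<And>x. x \<in> Xs \<Longrightarrow> v x \<in> carrier S"
  shows "mprod S v m = finprod S (\<lambda>x. v x [^]\<^bsub>S\<^esub> count m x) Xs"
proof -
  interpret S: cring S by fact
  show ?thesis unfolding mprod_def
    by (rule S.finprod_mono_neutral_cong_left) (use assms in \<open>auto simp: not_in_iff\<close>)
qed

lemma mprod_closed:
  assumes "cring S" "\<And>x. x \<in> set_mset m \<Longrightarrow> v x \<in> carrier S"
  shows "mprod S v m \<in> carrier S"
proof -
  interpret S: cring S by fact
  show ?thesis unfolding mprod_def using assms by (auto intro!: S.finprod_closed)
qed

lemma mprod_add:
  assumes "cring S" "\<And>x. x \<in> set_mset a \<union> set_mset b \<Longrightarrow> v x \<in> carrier S"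
  shows "mprod S v (a + b) = mprod S v a \<otimes>\<^bsub>S\<^esub> mprod S v b"
proof -
  interpret S: cring S by fact
  let ?X = "set_mset a \<union> set_mset b"
  have "mprod S v (a + b) = finprod S (\<lambda>x. v x [^]\<^bsub>S\<^esub> count (a + b) x) ?X"
    using assms by (intro mprod_superset) auto
  also have "\<dots> = finprod S (\<lambda>x. v x [^]\<^bsub>S\<^esub> count a x \<otimes>\<^bsub>S\<^esub> v x [^]\<^bsub>S\<^esub> count b x) ?X"
    using assms by (intro S.finprod_cong') (auto simp: S.nat_pow_mult)
  also have "\<dots> = finprod S (\<lambda>x. v x [^]\<^bsub>S\<^esub> count a x) ?X \<otimes>\<^bsub>S\<^esub> finprod S (\<lambda>x. v x [^]\<^bsub>S\<^esub> count b x) ?X"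
    using assms by (intro S.finprod_multf) auto
  also have "\<dots> = mprod S v a \<otimes>\<^bsub>S\<^esub> mprod S v b"
    using assms by (subst (1 2) mprod_superset[of S ?X]) auto
  finally show ?thesis .
qed

lemma mprod_empty: "cring S \<Longrightarrow> mprod S v {#} = \<one>\<^bsub>S\<^esub>"
  unfolding mprod_def by (simp add: comm_monoid.finprod_empty cring.axioms(2))

lemma mprod_single:
  assumes "cring S" "v x \<in> carrier S"
  shows "mprod S v {#x#} = v x"
proof -
  interpret S: cring S by fact
  show ?thesis using assms by (simp add: mprod_def)
qed

context cring
begin

lemma poly_zero_closed: "\<zero>\<^bsub>poly_ring R V\<^esub> \<in> carrier (poly_ring R V)"
  by (simp add: poly_carrier poly_zero)
lemma poly_add_closed: "P \<in> carrier (poly_ring R V) \<Longrightarrow> Q \<in> carrier (poly_ring R V) \<Longrightarrow>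
   P \<oplus>\<^bsub>poly_ring R V\<^esub> Q \<in> carrier (poly_ring R V)"
  by (rule abelian_monoid.a_closed[OF abelian_group.axioms(1)[OF poly_abelian_group]])

lemma poly_hom_by_monos:
  assumes S: "ring S"
    and cl: "\<And>P. P \<in> carrier (poly_ring R V) \<Longrightarrow> L P \<in> carrier S"
    and add: "\<And>P Q. P \<in> carrier (poly_ring R V) \<Longrightarrow> Q \<in> carrier (poly_ring R V) \<Longrightarrow>
          L (P \<oplus>\<^bsub>poly_ring R V\<^esub> Q) = L P \<oplus>\<^bsub>S\<^esub> L Q"
    and mm: "\<And>r s a b. r \<in> carrier R \<Longrightarrow> s \<in> carrier R \<Longrightarrow> r \<noteq> \<zero> \<Longrightarrow> s \<noteq> \<zero> \<Longrightarrow>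
          set_mset a \<subseteq> V \<Longrightarrow> set_mset b \<subseteq> V \<Longrightarrow>
          L (pmono R r a \<otimes>\<^bsub>poly_ring R V\<^esub> pmono R s b) = L (pmono R r a) \<otimes>\<^bsub>S\<^esub> L (pmono R s b)"
    and one: "L \<one>\<^bsub>poly_ring R V\<^esub> = \<one>\<^bsub>S\<^esub>"
  shows "L \<in> ring_hom (poly_ring R V) S"
proof -
  interpret S: ring S by fact
  interpret P: cring "poly_ring R V" by (rule poly_cring)
  have L0: "L \<zero>\<^bsub>poly_ring R V\<^esub> = \<zero>\<^bsub>S\<^esub>"
  proof -
    have "L \<zero>\<^bsub>poly_ring R V\<^esub> = L \<zero>\<^bsub>poly_ring R V\<^esub> \<oplus>\<^bsub>S\<^esub> L \<zero>\<^bsub>poly_ring R V\<^esub>"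
      using add[of "\<zero>\<^bsub>poly_ring R V\<^esub>" "\<zero>\<^bsub>poly_ring R V\<^esub>"] by simp
    thus ?thesis using cl[of "\<zero>\<^bsub>poly_ring R V\<^esub>"] by (metis P.zero_closed S.add.l_cancel_one')
  qed
  have mult: "L (P \<otimes>\<^bsub>poly_ring R V\<^esub> Q) = L P \<otimes>\<^bsub>S\<^esub> L Q"
    if P: "P \<in> carrier (poly_ring R V)" and Q: "Q \<in> carrier (poly_ring R V)" for P Q
  proof -
    have "\<forall>Q\<in>carrier (poly_ring R V). L (P \<otimes>\<^bsub>poly_ring R V\<^esub> Q) = L P \<otimes>\<^bsub>S\<^esub> L Q"
    proof (rule poly_induct[OF P])
      show "\<forall>Q\<in>carrier (poly_ring R V). L (\<zero>\<^bsub>poly_ring R V\<^esub> \<otimes>\<^bsub>poly_ring R V\<^esub> Q) = L \<zero>\<^bsub>poly_ring R V\<^esub> \<otimes>\<^bsub>S\<^esub> L Q"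
        using L0 cl by simp
    next
      fix r a assume ra: "r \<in> carrier R" "r \<noteq> \<zero>" "set_mset a \<subseteq> V"
      have pc: "pmono R r a \<in> carrier (poly_ring R V)" using ra by (intro pmono_carrier) auto
      show "\<forall>Q\<in>carrier (poly_ring R V). L (pmono R r a \<otimes>\<^bsub>poly_ring R V\<^esub> Q) = L (pmono R r a) \<otimes>\<^bsub>S\<^esub> L Q"
      proof
        fix Q assume Q: "Q \<in> carrier (poly_ring R V)"
        show "L (pmono R r a \<otimes>\<^bsub>poly_ring R V\<^esub> Q) = L (pmono R r a) \<otimes>\<^bsub>S\<^esub> L Q"
        proof (rule poly_induct[OF Q])
          show "L (pmono R r a \<otimes>\<^bsub>poly_ring R V\<^esub> \<zero>\<^bsub>poly_ring R V\<^esub>) = L (pmono R r a) \<otimes>\<^bsub>S\<^esub> L \<zero>\<^bsub>poly_ring R V\<^esub>"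
            using L0 cl pc by simp
        next
          fix s b assume "s \<in> carrier R" "s \<noteq> \<zero>" "set_mset b \<subseteq> V"
          thus "L (pmono R r a \<otimes>\<^bsub>poly_ring R V\<^esub> pmono R s b) = L (pmono R r a) \<otimes>\<^bsub>S\<^esub> L (pmono R s b)"
            using mm ra by blast
        next
          fix P1 Q1 assume "P1 \<in> carrier (poly_ring R V)" "Q1 \<in> carrier (poly_ring R V)"
            "L (pmono R r a \<otimes>\<^bsub>poly_ring R V\<^esub> P1) = L (pmono R r a) \<otimes>\<^bsub>S\<^esub> L P1"
            "L (pmono R r a \<otimes>\<^bsub>poly_ring R V\<^esub> Q1) = L (pmono R r a) \<otimes>\<^bsub>S\<^esub> L Q1"
          thus "L (pmono R r a \<otimes>\<^bsub>poly_ring R V\<^esub> (P1 \<oplus>\<^bsub>poly_ring R V\<^esub> Q1)) = L (pmono R r a) \<otimes>\<^bsub>S\<^esub> L (P1 \<oplus>\<^bsub>poly_ring R V\<^esub> Q1)"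
            using pc cl by (simp add: P.r_distr add S.r_distr)
        qed
      qed
    next
      fix P1 Q1 assume "P1 \<in> carrier (poly_ring R V)" "Q1 \<in> carrier (poly_ring R V)"
        "\<forall>Q\<in>carrier (poly_ring R V). L (P1 \<otimes>\<^bsub>poly_ring R V\<^esub> Q) = L P1 \<otimes>\<^bsub>S\<^esub> L Q"
        "\<forall>Q\<in>carrier (poly_ring R V). L (Q1 \<otimes>\<^bsub>poly_ring R V\<^esub> Q) = L Q1 \<otimes>\<^bsub>S\<^esub> L Q"
      thus "\<forall>Q\<in>carrier (poly_ring R V). L ((P1 \<oplus>\<^bsub>poly_ring R V\<^esub> Q1) \<otimes>\<^bsub>poly_ring R V\<^esub> Q) = L (P1 \<oplus>\<^bsub>poly_ring R V\<^esub> Q1) \<otimes>\<^bsub>S\<^esub> L Q"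
        using cl by (simp add: P.l_distr add S.l_distr)
    qed
    thus ?thesis using Q by blast
  qed
  show ?thesis by (rule ring_hom_memI) (auto simp: cl mult add one)
qed

lemma pmono_add_mset:
  "r \<in> carrier R \<Longrightarrow> pmono R r (add_mset x a) = pvar R x \<otimes>\<^bsub>poly_ring R V\<^esub> pmono R r a"
  by (simp add: pvar_pmono pmono_mult)

lemma poly_hom_unique:
  assumes S: "ring S"
    and h: "h \<in> ring_hom (poly_ring R V) S" and h': "h' \<in> ring_hom (poly_ring R V) S"
    and var: "\<And>x. x \<in> V \<Longrightarrow> h (pvar R x) = h' (pvar R x)"
    and const: "\<And>r. r \<in> carrier R \<Longrightarrow> h (pconst R r) = h' (pconst R r)"
    and P: "P \<in> carrier (poly_ring R V)"
  shows "h P = h' P"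
proof -
  interpret P: cring "poly_ring R V" by (rule poly_cring)
  have hmonos: "h (pmono R r a) = h' (pmono R r a)" if "r \<in> carrier R" "set_mset a \<subseteq> V" for r a
    using that(2)
  proof (induction a)
    case empty
    thus ?case using const[OF that(1)] by (simp add: pconst_pmono)
  next
    case (add x a)
    have xv: "x \<in> V" using add by auto
    have c1: "pvar R x \<in> carrier (poly_ring R V)" unfolding pvar_pmono using xv by (intro pmono_carrier) auto
    have c2: "pmono R r a \<in> carrier (poly_ring R V)" using add that by (intro pmono_carrier) auto
    show ?case using add var[OF xv] c1 c2 that h h'
      by (simp add: pmono_add_mset[where V=V] ring_hom_mult)
  qed
  show ?thesis
  proof (rule poly_induct[OF P])
    show "h \<zero>\<^bsub>poly_ring R V\<^esub> = h' \<zero>\<^bsub>poly_ring R V\<^esub>"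
      using h h' S by (simp add: ring_hom_zero P.ring_axioms)
  next
    fix r a assume "r \<in> carrier R" "r \<noteq> \<zero>" "set_mset a \<subseteq> V"
    thus "h (pmono R r a) = h' (pmono R r a)" using hmonos by blast
  next
    fix P Q assume "P \<in> carrier (poly_ring R V)" "Q \<in> carrier (poly_ring R V)" "h P = h' P" "h Q = h' Q"
    thus "h (P \<oplus>\<^bsub>poly_ring R V\<^esub> Q) = h' (P \<oplus>\<^bsub>poly_ring R V\<^esub> Q)"
      using h h' by (simp add: ring_hom_add)
  qed
qed

end


context cring
begin

lemma poly_supp_subset:
  assumes "P \<in> carrier (poly_ring R V)"
  shows "finite {m. P m \<noteq> \<zero>}" "\<forall>m\<in>{m. P m \<noteq> \<zero>}. set_mset m \<subseteq> V" "\<And>m. P m \<in> carrier R"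
  using assms by (auto simp: poly_carrier)

lemma peval_superset:
  assumes S: "cring S" and c: "c \<in> ring_hom R S" and v: "\<And>x. x \<in> V \<Longrightarrow> v x \<in> carrier S"
    and P: "P \<in> carrier (poly_ring R V)" and M: "finite M" "{m. P m \<noteq> \<zero>} \<subseteq> M"
    and MV: "\<And>m. m \<in> M \<Longrightarrow> set_mset m \<subseteq> V"
  shows "peval R S c v P = finsum S (\<lambda>m. c (P m) \<otimes>\<^bsub>S\<^esub> mprod S v m) M"
proof -
  interpret S: cring S by fact
  have mc: "mprod S v m \<in> carrier S" if "m \<in> M" for m
    using MV[OF that] v by (intro mprod_closed[OF S]) auto
  have cc: "c (P m) \<in> carrier S" for m using P c by (simp add: poly_carrier ring_hom_closed)
  have c0: "c \<zero> = \<zero>\<^bsub>S\<^esub>" by (rule ring_hom_zero[OF c ring_axioms S.ring_axioms])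
  show ?thesis unfolding peval_def
    by (rule S.add.finprod_mono_neutral_cong_left) (use M mc cc c0 in auto)
qed

lemma peval_closed:
  assumes S: "cring S" and c: "c \<in> ring_hom R S" and v: "\<And>x. x \<in> V \<Longrightarrow> v x \<in> carrier S"
    and P: "P \<in> carrier (poly_ring R V)"
  shows "peval R S c v P \<in> carrier S"
proof -
  interpret S: cring S by fact
  have "c (P m) \<otimes>\<^bsub>S\<^esub> mprod S v m \<in> carrier S" if "P m \<noteq> \<zero>" for m
  proof -
    have "set_mset m \<subseteq> V" using P that by (simp add: poly_carrier)
    hence "mprod S v m \<in> carrier S" using v by (intro mprod_closed[OF S]) auto
    moreover have "c (P m) \<in> carrier S" using P c by (simp add: poly_carrier ring_hom_closed)
    ultimately show ?thesis by simp
  qed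
  thus ?thesis unfolding peval_def by (intro S.finsum_closed) auto
qed

lemma peval_add:
  assumes S: "cring S" and c: "c \<in> ring_hom R S" and v: "\<And>x. x \<in> V \<Longrightarrow> v x \<in> carrier S"
    and P: "P \<in> carrier (poly_ring R V)" and Q: "Q \<in> carrier (poly_ring R V)"
  shows "peval R S c v (P \<oplus>\<^bsub>poly_ring R V\<^esub> Q) = peval R S c v P \<oplus>\<^bsub>S\<^esub> peval R S c v Q"
proof -
  interpret S: cring S by fact
  let ?M = "{m. P m \<noteq> \<zero>} \<union> {m. Q m \<noteq> \<zero>}"
  have fin: "finite ?M" using P Q by (simp add: poly_carrier)
  have MV: "\<And>m. m \<in> ?M \<Longrightarrow> set_mset m \<subseteq> V" using P Q by (auto simp: poly_carrier)
  have PQ: "P \<oplus>\<^bsub>poly_ring R V\<^esub> Q \<in> carrier (poly_ring R V)" using P Q by (rule poly_add_closed)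
  have sub: "{m. (P \<oplus>\<^bsub>poly_ring R V\<^esub> Q) m \<noteq> \<zero>} \<subseteq> ?M" using P Q by (auto simp: poly_add poly_carrier)
  have mc: "mprod S v m \<in> carrier S" if "m \<in> ?M" for m
    using MV[OF that] v by (intro mprod_closed[OF S]) auto
  have cc: "c (P m) \<in> carrier S" "c (Q m) \<in> carrier S" for m using P Q c by (simp_all add: poly_carrier ring_hom_closed)
  have "peval R S c v (P \<oplus>\<^bsub>poly_ring R V\<^esub> Q) = finsum S (\<lambda>m. c ((P \<oplus>\<^bsub>poly_ring R V\<^esub> Q) m) \<otimes>\<^bsub>S\<^esub> mprod S v m) ?M"
    by (rule peval_superset[OF S c v PQ fin sub MV])
  also have "\<dots> = finsum S (\<lambda>m. c (P m) \<otimes>\<^bsub>S\<^esub> mprod S v m \<oplus>\<^bsub>S\<^esub> c (Q m) \<otimes>\<^bsub>S\<^esub> mprod S v m) ?M"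
    using P Q mc cc by (intro S.finsum_cong') (auto simp: poly_add poly_carrier ring_hom_add[OF c] S.l_distr)
  also have "\<dots> = finsum S (\<lambda>m. c (P m) \<otimes>\<^bsub>S\<^esub> mprod S v m) ?M \<oplus>\<^bsub>S\<^esub> finsum S (\<lambda>m. c (Q m) \<otimes>\<^bsub>S\<^esub> mprod S v m) ?M"
    using mc cc by (intro S.finsum_addf) auto
  also have "\<dots> = peval R S c v P \<oplus>\<^bsub>S\<^esub> peval R S c v Q"
    using peval_superset[OF S c v P fin _ MV] peval_superset[OF S c v Q fin _ MV] by auto
  finally show ?thesis .
qed

lemma peval_pmono:
  assumes S: "cring S" and c: "c \<in> ring_hom R S" and v: "\<And>x. x \<in> V \<Longrightarrow> v x \<in> carrier S"
    and r: "r \<in> carrier R" and a: "set_mset a \<subseteq> V"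
  shows "peval R S c v (pmono R r a) = c r \<otimes>\<^bsub>S\<^esub> mprod S v a"
proof -
  interpret S: cring S by fact
  have pc: "pmono R r a \<in> carrier (poly_ring R V)" using r a by (intro pmono_carrier) auto
  have "peval R S c v (pmono R r a) = finsum S (\<lambda>m. c (pmono R r a m) \<otimes>\<^bsub>S\<^esub> mprod S v m) {a}"
    by (rule peval_superset[OF S c v pc]) (use a in \<open>auto simp: pmono_def\<close>)
  also have "\<dots> = c r \<otimes>\<^bsub>S\<^esub> mprod S v a"
  proof -
    have "mprod S v a \<in> carrier S" using a v by (intro mprod_closed[OF S]) auto
    moreover have "c r \<in> carrier S" using r c by (simp add: ring_hom_closed)
    ultimately show ?thesis by (simp add: pmono_def)
  qed
  finally show ?thesis .
qed

lemma peval_hom: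
  assumes S: "cring S" and c: "c \<in> ring_hom R S" and v: "\<And>x. x \<in> V \<Longrightarrow> v x \<in> carrier S"
  shows "peval R S c v \<in> ring_hom (poly_ring R V) S"
proof -
  interpret S: cring S by fact
  show ?thesis
  proof (rule poly_hom_by_monos)
    fix r s a b assume rs: "r \<in> carrier R" "s \<in> carrier R" and ab: "set_mset a \<subseteq> V" "set_mset b \<subseteq> V"
    have ma: "mprod S v a \<in> carrier S" "mprod S v b \<in> carrier S"
      using ab v by (auto intro!: mprod_closed[OF S])
    have cr: "c r \<in> carrier S" "c s \<in> carrier S" using rs c by (auto intro: ring_hom_closed)
    have "peval R S c v (pmono R r a \<otimes>\<^bsub>poly_ring R V\<^esub> pmono R s b) = c (r \<otimes> s) \<otimes>\<^bsub>S\<^esub> mprod S v (a + b)"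
      using rs ab by (simp add: pmono_mult peval_pmono[OF S c v])
    also have "\<dots> = (c r \<otimes>\<^bsub>S\<^esub> c s) \<otimes>\<^bsub>S\<^esub> (mprod S v a \<otimes>\<^bsub>S\<^esub> mprod S v b)"
      using rs ab v by (subst mprod_add[OF S]) (auto simp: ring_hom_mult[OF c])
    also have "\<dots> = (c r \<otimes>\<^bsub>S\<^esub> mprod S v a) \<otimes>\<^bsub>S\<^esub> (c s \<otimes>\<^bsub>S\<^esub> mprod S v b)"
      using ma cr by (simp add: S.m_ac)
    finally show "peval R S c v (pmono R r a \<otimes>\<^bsub>poly_ring R V\<^esub> pmono R s b) =
        peval R S c v (pmono R r a) \<otimes>\<^bsub>S\<^esub> peval R S c v (pmono R s b)"
      using rs ab by (simp add: peval_pmono[OF S c v])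
  next
    show "peval R S c v \<one>\<^bsub>poly_ring R V\<^esub> = \<one>\<^bsub>S\<^esub>"
      unfolding poly_one using c by (simp add: peval_pmono[OF S c v] mprod_empty[OF S] ring_hom_one)
  qed (auto intro: peval_closed[OF S c v] peval_add[OF S c v] S.ring_axioms)
qed

lemma peval_pvar:
  assumes S: "cring S" and c: "c \<in> ring_hom R S" and v: "\<And>x. x \<in> V \<Longrightarrow> v x \<in> carrier S"
    and x: "x \<in> V"
  shows "peval R S c v (pvar R x) = v x"
proof -
  interpret S: cring S by fact
  show ?thesis unfolding pvar_pmono using x v c
    by (simp add: peval_pmono[OF S c v] mprod_single[OF S] ring_hom_one)
qed

lemma peval_pconst:
  assumes S: "cring S" and c: "c \<in> ring_hom R S" and v: "\<And>x. x \<in> V \<Longrightarrow> v x \<in> carrier S"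
    and r: "r \<in> carrier R"
  shows "peval R S c v (pconst R r) = c r"
proof -
  interpret S: cring S by fact
  show ?thesis unfolding pconst_pmono using r c
    by (simp add: peval_pmono[OF S c v] mprod_empty[OF S] ring_hom_closed)
qed

lemma prename_superset:
  assumes P: "P \<in> carrier (poly_ring R V)" and M: "finite M" "{m. P m \<noteq> \<zero>} \<subseteq> M"
  shows "prename R sigma P m' = (\<Oplus>m\<in>{m\<in>M. image_mset sigma m = m'}. P m)"
  unfolding prename_def
  by (rule add.finprod_mono_neutral_cong_left) (use P M in \<open>auto simp: poly_carrier\<close>)

lemma prename_closed:
  assumes P: "P \<in> carrier (poly_ring R V)" and sig: "sigma ` V \<subseteq> W"
  shows "prename R sigma P \<in> carrier (poly_ring R W)"
proof -
  have ne: "\<exists>m. image_mset sigma m = m' \<and> P m \<noteq> \<zero>" if "prename R sigma P m' \<noteq> \<zero>" for m'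
  proof (rule ccontr)
    assume "\<not> ?thesis"
    hence e: "{m. image_mset sigma m = m' \<and> P m \<noteq> \<zero>} = {}" by auto
    have "prename R sigma P m' = (\<Oplus>m\<in>{}. P m)" unfolding prename_def e ..
    thus False using that by simp
  qed
  have "{m'. prename R sigma P m' \<noteq> \<zero>} \<subseteq> image_mset sigma ` {m. P m \<noteq> \<zero>}"
    using ne by blast
  moreover have "finite {m. P m \<noteq> \<zero>}" using P by (simp add: poly_carrier)
  ultimately have fin: "finite {m'. prename R sigma P m' \<noteq> \<zero>}"
    by (meson finite_imageI finite_subset)
  have vars: "set_mset m' \<subseteq> W" if nz0: "prename R sigma P m' \<noteq> \<zero>" for m'
  proof -
    obtain m where m: "image_mset sigma m = m'" "P m \<noteq> \<zero>" using ne[OF nz0] by blast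
    have "set_mset m \<subseteq> V" using P m by (simp add: poly_carrier)
    thus ?thesis using m sig by (auto simp: image_subset_iff subset_iff)
  qed
  have cl: "prename R sigma P m' \<in> carrier R" for m'
    unfolding prename_def using P by (intro finsum_closed) (auto simp: poly_carrier)
  show ?thesis using fin vars cl by (simp add: poly_carrier)
qed

lemma prename_add:
  assumes P: "P \<in> carrier (poly_ring R V)" and Q: "Q \<in> carrier (poly_ring R V)"
  shows "prename R sigma (P \<oplus>\<^bsub>poly_ring R V\<^esub> Q) = prename R sigma P \<oplus>\<^bsub>poly_ring R W\<^esub> prename R sigma Q"
proof (rule ext)
  fix m'
  let ?M = "{m. P m \<noteq> \<zero>} \<union> {m. Q m \<noteq> \<zero>}"
  have fin: "finite ?M" using P Q by (simp add: poly_carrier)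
  have PQ: "P \<oplus>\<^bsub>poly_ring R V\<^esub> Q \<in> carrier (poly_ring R V)" using P Q by (rule poly_add_closed)
  have sub: "{m. (P \<oplus>\<^bsub>poly_ring R V\<^esub> Q) m \<noteq> \<zero>} \<subseteq> ?M" using P Q by (auto simp: poly_add poly_carrier)
  have "prename R sigma (P \<oplus>\<^bsub>poly_ring R V\<^esub> Q) m' = (\<Oplus>m\<in>{m\<in>?M. image_mset sigma m = m'}. P m \<oplus> Q m)"
    using prename_superset[OF PQ fin sub] by (simp add: poly_add)
  also have "\<dots> = (\<Oplus>m\<in>{m\<in>?M. image_mset sigma m = m'}. P m) \<oplus> (\<Oplus>m\<in>{m\<in>?M. image_mset sigma m = m'}. Q m)"
    using P Q by (intro finsum_addf) (auto simp: poly_carrier)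
  also have "\<dots> = prename R sigma P m' \<oplus> prename R sigma Q m'"
    using prename_superset[OF P fin, of sigma m'] prename_superset[OF Q fin, of sigma m'] by auto
  finally show "prename R sigma (P \<oplus>\<^bsub>poly_ring R V\<^esub> Q) m' = (prename R sigma P \<oplus>\<^bsub>poly_ring R W\<^esub> prename R sigma Q) m'"
    by (simp add: poly_add)
qed

lemma prename_pmono:
  assumes r: "r \<in> carrier R"
  shows "prename R sigma (pmono R r a) = pmono R r (image_mset sigma a)"
proof (rule ext)
  fix m'
  have pc: "pmono R r a \<in> carrier (poly_ring R (set_mset a))" using r by (intro pmono_carrier) auto
  have "prename R sigma (pmono R r a) m' = (\<Oplus>m\<in>{m\<in>{a}. image_mset sigma m = m'}. pmono R r a m)"
    by (rule prename_superset[OF pc]) (auto simp: pmono_def)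
  also have "\<dots> = pmono R r (image_mset sigma a) m'"
  proof (cases "image_mset sigma a = m'")
    case True
    hence "{m\<in>{a}. image_mset sigma m = m'} = {a}" by auto
    thus ?thesis using r True by (simp add: pmono_def)
  next
    case False
    hence e: "{m\<in>{a}. image_mset sigma m = m'} = {}" by auto
    show ?thesis using r False by (subst e) (simp add: pmono_def)
  qed
  finally show "prename R sigma (pmono R r a) m' = pmono R r (image_mset sigma a) m'" .
qed

lemma prename_hom:
  assumes sig: "sigma ` V \<subseteq> W"
  shows "prename R sigma \<in> ring_hom (poly_ring R V) (poly_ring R W)"
proof (rule poly_hom_by_monos)
  show "ring (poly_ring R W)" using poly_cring cring.axioms(1) by blast
  fix r s a b assume rs: "r \<in> carrier R" "s \<in> carrier R"
  show "prename R sigma (pmono R r a \<otimes>\<^bsub>poly_ring R V\<^esub> pmono R s b) =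
        prename R sigma (pmono R r a) \<otimes>\<^bsub>poly_ring R W\<^esub> prename R sigma (pmono R s b)"
    using rs by (simp add: pmono_mult prename_pmono)
next
  show "prename R sigma \<one>\<^bsub>poly_ring R V\<^esub> = \<one>\<^bsub>poly_ring R W\<^esub>"
    by (simp add: poly_one prename_pmono)
qed (auto intro: prename_closed[OF _ sig] prename_add)

lemma prename_pvar: "prename R sigma (pvar R x) = pvar R (sigma x)"
  by (simp add: pvar_pmono prename_pmono)

lemma prename_pconst: "r \<in> carrier R \<Longrightarrow> prename R sigma (pconst R r) = pconst R r"
  by (simp add: pconst_pmono prename_pmono)

end


lemma hom_minus:
  assumes "cring P" "cring S" "h \<in> ring_hom P S" "x \<in> carrier P" "y \<in> carrier P"
  shows "h (x \<ominus>\<^bsub>P\<^esub> y) = h x \<ominus>\<^bsub>S\<^esub> h y"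
proof -
  interpret ring_hom_cring P S h by (intro ring_hom_cring.intro ring_hom_cring_axioms.intro assms)
  show ?thesis using assms by simp
qed

lemma ring_hom_cong:
  assumes "f \<in> ring_hom R S" "\<And>x. x \<in> carrier R \<Longrightarrow> g x = f x" "ring R"
  shows "g \<in> ring_hom R S"
proof (rule ring_hom_memI)
  show "\<And>x. x \<in> carrier R \<Longrightarrow> g x \<in> carrier S" using assms by (simp add: ring_hom_closed)
  show "\<And>x y. x \<in> carrier R \<Longrightarrow> y \<in> carrier R \<Longrightarrow> g (x \<otimes>\<^bsub>R\<^esub> y) = g x \<otimes>\<^bsub>S\<^esub> g y"
    using assms by (simp add: ring_hom_mult ring.ring_simprules(5))
  show "\<And>x y. x \<in> carrier R \<Longrightarrow> y \<in> carrier R \<Longrightarrow> g (x \<oplus>\<^bsub>R\<^esub> y) = g x \<oplus>\<^bsub>S\<^esub> g y"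
    using assms by (simp add: ring_hom_add ring.ring_simprules(1))
  show "g \<one>\<^bsub>R\<^esub> = \<one>\<^bsub>S\<^esub>" using assms by (simp add: ring_hom_one ring.ring_simprules(6))
qed

definition qlift :: "('p \<Rightarrow> 's) \<Rightarrow> 'p set \<Rightarrow> 's" where "qlift psi XX = psi (SOME p. p \<in> XX)"

lemma quot_carrier_rep:
  assumes "ring P" "ideal J P" "XX \<in> carrier (P Quot J)"
  shows "(SOME p. p \<in> XX) \<in> carrier P \<and> XX = J +>\<^bsub>P\<^esub> (SOME p. p \<in> XX)"
proof -
  interpret ideal J P by fact
  obtain p where p: "p \<in> carrier P" "XX = J +>\<^bsub>P\<^esub> p"
    using assms(3) unfolding FactRing_def A_RCOSETS_def' by auto
  have "p \<in> XX" using p a_rcos_self by simp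
  hence q: "(SOME p. p \<in> XX) \<in> XX" by (rule someI)
  hence "(SOME p. p \<in> XX) \<in> carrier P" using p by (metis a_elemrcos_carrier)
  moreover have "XX = J +>\<^bsub>P\<^esub> (SOME p. p \<in> XX)" using p q by (metis a_repr_independence')
  ultimately show ?thesis by blast
qed

lemma quot_carrier_coset:
  assumes "ring P" "ideal J P" "p \<in> carrier P"
  shows "J +>\<^bsub>P\<^esub> p \<in> carrier (P Quot J)"
proof -
  interpret ideal J P by fact
  show ?thesis using assms unfolding FactRing_def A_RCOSETS_def' by auto
qed

lemma qlift_coset:
  assumes "ring P" "ideal J P" "ring S" "psi \<in> ring_hom P S" "\<And>x. x \<in> J \<Longrightarrow> psi x = \<zero>\<^bsub>S\<^esub>"
    and p: "p \<in> carrier P"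
  shows "qlift psi (J +>\<^bsub>P\<^esub> p) = psi p"
proof -
  interpret ideal J P by fact
  interpret S: ring S by fact
  have "p \<in> J +>\<^bsub>P\<^esub> p" using p a_rcos_self by simp
  hence q: "(SOME q. q \<in> J +>\<^bsub>P\<^esub> p) \<in> J +>\<^bsub>P\<^esub> p" by (rule someI)
  then obtain k where k: "k \<in> J" "(SOME q. q \<in> J +>\<^bsub>P\<^esub> p) = k \<oplus>\<^bsub>P\<^esub> p"
    unfolding a_r_coset_def' by auto
  have kc: "k \<in> carrier P" using k(1) a_Hcarr by blast
  have "psi (k \<oplus>\<^bsub>P\<^esub> p) = psi p"
    using assms k kc by (simp add: ring_hom_add ring_hom_closed)
  thus ?thesis unfolding qlift_def using k by simp
qed

lemma qlift_hom:
  assumes P: "ring P" and J: "ideal J P" and S: "ring S" and psi: "psi \<in> ring_hom P S"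
    and z: "\<And>x. x \<in> J \<Longrightarrow> psi x = \<zero>\<^bsub>S\<^esub>"
  shows "qlift psi \<in> ring_hom (P Quot J) S"
proof -
  interpret ideal J P by fact
  interpret S: ring S by fact
  have rh: "(+>\<^bsub>P\<^esub>) J \<in> ring_hom P (P Quot J)" by (rule rcos_ring_hom)
  have val: "\<And>p. p \<in> carrier P \<Longrightarrow> qlift psi (J +>\<^bsub>P\<^esub> p) = psi p"
    using qlift_coset[OF P J S psi z] by blast
  show ?thesis
  proof (rule ring_hom_memI)
    fix XX assume "XX \<in> carrier (P Quot J)"
    then obtain p where p: "p \<in> carrier P" "XX = J +>\<^bsub>P\<^esub> p" using quot_carrier_rep[OF P J] by blast
    thus "qlift psi XX \<in> carrier S" using val psi by (simp add: ring_hom_closed)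
  next
    fix XX YY assume "XX \<in> carrier (P Quot J)" "YY \<in> carrier (P Quot J)"
    then obtain p q where p: "p \<in> carrier P" "XX = J +>\<^bsub>P\<^esub> p" and q: "q \<in> carrier P" "YY = J +>\<^bsub>P\<^esub> q"
      using quot_carrier_rep[OF P J] by metis
    have "XX \<otimes>\<^bsub>P Quot J\<^esub> YY = J +>\<^bsub>P\<^esub> (p \<otimes>\<^bsub>P\<^esub> q)" using p q ring_hom_mult[OF rh] by simp
    thus "qlift psi (XX \<otimes>\<^bsub>P Quot J\<^esub> YY) = qlift psi XX \<otimes>\<^bsub>S\<^esub> qlift psi YY"
      using p q val psi by (simp add: ring_hom_mult)
    have "XX \<oplus>\<^bsub>P Quot J\<^esub> YY = J +>\<^bsub>P\<^esub> (p \<oplus>\<^bsub>P\<^esub> q)" using p q ring_hom_add[OF rh] by simp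
    thus "qlift psi (XX \<oplus>\<^bsub>P Quot J\<^esub> YY) = qlift psi XX \<oplus>\<^bsub>S\<^esub> qlift psi YY"
      using p q val psi by (simp add: ring_hom_add)
  next
    have "\<one>\<^bsub>P Quot J\<^esub> = J +>\<^bsub>P\<^esub> \<one>\<^bsub>P\<^esub>" by (simp add: FactRing_def)
    thus "qlift psi \<one>\<^bsub>P Quot J\<^esub> = \<one>\<^bsub>S\<^esub>" using val psi by (simp add: ring_hom_one)
  qed
qed

lemma kill_genideal:
  assumes P: "ring P" and S: "ring S" and psi: "psi \<in> ring_hom P S" and sub: "Srel \<subseteq> carrier P"
    and z: "\<And>x. x \<in> Srel \<Longrightarrow> psi x = \<zero>\<^bsub>S\<^esub>" and x: "x \<in> genideal P Srel"
  shows "psi x = \<zero>\<^bsub>S\<^esub>"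
proof -
  interpret P: ring P by fact
  interpret S: ring S by fact
  interpret h: ring_hom_ring P S psi by (intro ring_hom_ringI2 P S psi)
  have "ideal {r \<in> carrier P. psi r \<in> {\<zero>\<^bsub>S\<^esub>}} P" by (rule h.ideal_vimage[OF S.zeroideal])
  moreover have "Srel \<subseteq> {r \<in> carrier P. psi r \<in> {\<zero>\<^bsub>S\<^esub>}}" using sub z by auto
  ultimately have "genideal P Srel \<subseteq> {r \<in> carrier P. psi r \<in> {\<zero>\<^bsub>S\<^esub>}}" by (rule P.genideal_minimal)
  thus ?thesis using x by auto
qed



definition tlift :: "('r,'m) ring_scheme \<Rightarrow> ('s,'n) ring_scheme \<Rightarrow> ('r \<Rightarrow> 's) \<Rightarrow> ('i \<Rightarrow> 'a \<Rightarrow> 's)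
    \<Rightarrow> (('i \<times> 'a) multiset \<Rightarrow> 'r) set \<Rightarrow> 's"
  where "tlift R S c v = qlift (peval R S c (\<lambda>(i, a). v i a))"

lemma minus_self: "ring S \<Longrightarrow> x \<in> carrier S \<Longrightarrow> x \<ominus>\<^bsub>S\<^esub> x = \<zero>\<^bsub>S\<^esub>"
  by (simp add: ring.ring_simprules(4) abelian_group.minus_eq ring.is_abelian_group abelian_group.r_neg)

context cring
begin

lemma pvar_carrier: "x \<in> V \<Longrightarrow> pvar R x \<in> carrier (poly_ring R V)"
  unfolding pvar_pmono by (rule pmono_carrier) auto

lemma pconst_carrier: "r \<in> carrier R \<Longrightarrow> pconst R r \<in> carrier (poly_ring R V)"
  unfolding pconst_pmono by (rule pmono_carrier) auto

lemma pconst_hom: "pconst R \<in> ring_hom R (poly_ring R V)"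
proof (rule ring_hom_memI)
  fix x y assume xy: "x \<in> carrier R" "y \<in> carrier R"
  show "pconst R (x \<otimes> y) = pconst R x \<otimes>\<^bsub>poly_ring R V\<^esub> pconst R y"
    using xy by (simp add: pconst_pmono pmono_mult)
  show "pconst R (x \<oplus> y) = pconst R x \<oplus>\<^bsub>poly_ring R V\<^esub> pconst R y"
    using xy by (auto simp: pconst_def poly_add)
qed (auto simp: pconst_carrier[unfolded pconst_pmono] poly_one pconst_pmono)

lemma tensor_rels_cases:
  assumes "x \<in> tensor_rels R A eta I"
  obtains i a b where "i \<in> I" "a \<in> carrier A" "b \<in> carrier A"
      "x = pvar R (i, a \<oplus>\<^bsub>A\<^esub> b) \<ominus>\<^bsub>poly_ring R (I \<times> carrier A)\<^esub>
           (pvar R (i, a) \<oplus>\<^bsub>poly_ring R (I \<times> carrier A)\<^esub> pvar R (i, b))"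
  | i a b where "i \<in> I" "a \<in> carrier A" "b \<in> carrier A"
      "x = pvar R (i, a \<otimes>\<^bsub>A\<^esub> b) \<ominus>\<^bsub>poly_ring R (I \<times> carrier A)\<^esub>
           (pvar R (i, a) \<otimes>\<^bsub>poly_ring R (I \<times> carrier A)\<^esub> pvar R (i, b))"
  | i where "i \<in> I" "x = pvar R (i, \<one>\<^bsub>A\<^esub>) \<ominus>\<^bsub>poly_ring R (I \<times> carrier A)\<^esub> \<one>\<^bsub>poly_ring R (I \<times> carrier A)\<^esub>"
  | i r where "i \<in> I" "r \<in> carrier R" "x = pvar R (i, eta r) \<ominus>\<^bsub>poly_ring R (I \<times> carrier A)\<^esub> pconst R r"
  using assms unfolding tensor_rels_def Let_def by blast

lemma tensor_rels_carrier:
  assumes A: "cring A" and eta: "eta \<in> ring_hom R A"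
  shows "tensor_rels R A eta I \<subseteq> carrier (poly_ring R (I \<times> carrier A))"
proof
  interpret A: cring A by fact
  interpret P: cring "poly_ring R (I \<times> carrier A)" by (rule poly_cring)
  fix x assume "x \<in> tensor_rels R A eta I"
  thus "x \<in> carrier (poly_ring R (I \<times> carrier A))"
    by (cases rule: tensor_rels_cases)
       (auto intro!: P.minus_closed P.m_closed P.a_closed pvar_carrier pconst_carrier ring_hom_closed[OF eta])
qed

lemma tensor_ideal_ideal:
  assumes A: "cring A" and eta: "eta \<in> ring_hom R A"
  shows "ideal (tensor_ideal R A eta I) (poly_ring R (I \<times> carrier A))"
proof -
  interpret P: cring "poly_ring R (I \<times> carrier A)" by (rule poly_cring)
  show ?thesis unfolding tensor_ideal_def by (rule P.genideal_ideal[OF tensor_rels_carrier[OF A eta]])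
qed

lemma rels_in_ideal:
  assumes A: "cring A" and eta: "eta \<in> ring_hom R A" and x: "x \<in> tensor_rels R A eta I"
  shows "x \<in> tensor_ideal R A eta I"
proof -
  interpret P: cring "poly_ring R (I \<times> carrier A)" by (rule poly_cring)
  show ?thesis unfolding tensor_ideal_def using P.genideal_self[OF tensor_rels_carrier[OF A eta]] x by blast
qed

lemma tensor_cring:
  assumes A: "cring A" and eta: "eta \<in> ring_hom R A"
  shows "cring (tensor R A eta I)"
  unfolding tensor_def by (rule ideal.quotient_is_cring[OF tensor_ideal_ideal[OF A eta] poly_cring])

lemma tcoset_hom:
  assumes A: "cring A" and eta: "eta \<in> ring_hom R A"
  shows "(+>\<^bsub>poly_ring R (I \<times> carrier A)\<^esub>) (tensor_ideal R A eta I) \<in> ring_hom (poly_ring R (I \<times> carrier A)) (tensor R A eta I)"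
  unfolding tensor_def by (rule ideal.rcos_ring_hom[OF tensor_ideal_ideal[OF A eta]])

lemma tunit_hom:
  assumes A: "cring A" and eta: "eta \<in> ring_hom R A"
  shows "tunit R A eta I \<in> ring_hom R (tensor R A eta I)"
proof -
  have "(+>\<^bsub>poly_ring R (I \<times> carrier A)\<^esub>) (tensor_ideal R A eta I) \<circ> pconst R \<in> ring_hom R (tensor R A eta I)"
    by (rule ring_hom_trans[OF pconst_hom tcoset_hom[OF A eta]])
  moreover have "tunit R A eta I = (+>\<^bsub>poly_ring R (I \<times> carrier A)\<^esub>) (tensor_ideal R A eta I) \<circ> pconst R"
    by (simp add: tunit_def fun_eq_iff)
  ultimately show ?thesis by simp
qed

lemma same_coset:
  assumes A: "cring A" and eta: "eta \<in> ring_hom R A"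
    and x: "x \<in> carrier (poly_ring R (I \<times> carrier A))" and y: "y \<in> carrier (poly_ring R (I \<times> carrier A))"
    and r: "x \<ominus>\<^bsub>poly_ring R (I \<times> carrier A)\<^esub> y \<in> tensor_rels R A eta I"
  shows "tensor_ideal R A eta I +>\<^bsub>poly_ring R (I \<times> carrier A)\<^esub> x = tensor_ideal R A eta I +>\<^bsub>poly_ring R (I \<times> carrier A)\<^esub> y"
proof -
  interpret P: cring "poly_ring R (I \<times> carrier A)" by (rule poly_cring)
  show ?thesis using P.quotient_eq_iff_same_a_r_cos[OF tensor_ideal_ideal[OF A eta] x y] rels_in_ideal[OF A eta r] by blast
qed

lemma tgen_hom:
  assumes A: "cring A" and eta: "eta \<in> ring_hom R A" and i: "i \<in> I"
  shows "tgen R A eta I i \<in> ring_hom A (tensor R A eta I)"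
    and "\<And>r. r \<in> carrier R \<Longrightarrow> tgen R A eta I i (eta r) = tunit R A eta I r"
proof -
  interpret A: cring A by fact
  interpret P: cring "poly_ring R (I \<times> carrier A)" by (rule poly_cring)
  let ?P = "poly_ring R (I \<times> carrier A)" and ?J = "tensor_ideal R A eta I"
  note ch = tcoset_hom[OF A eta, of I]
  have pv: "\<And>a. a \<in> carrier A \<Longrightarrow> pvar R (i, a) \<in> carrier ?P" using i by (auto intro: pvar_carrier)
  show "tgen R A eta I i \<in> ring_hom A (tensor R A eta I)"
  proof (rule ring_hom_memI)
    fix a assume "a \<in> carrier A"
    thus "tgen R A eta I i a \<in> carrier (tensor R A eta I)" unfolding tgen_def using pv ch by (simp add: ring_hom_closed)
  next
    fix a b assume ab: "a \<in> carrier A" "b \<in> carrier A"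
    have "?J +>\<^bsub>?P\<^esub> pvar R (i, a \<otimes>\<^bsub>A\<^esub> b) = ?J +>\<^bsub>?P\<^esub> (pvar R (i, a) \<otimes>\<^bsub>?P\<^esub> pvar R (i, b))"
      using ab i pv by (intro same_coset[OF A eta]) (auto simp: tensor_rels_def Let_def)
    thus "tgen R A eta I i (a \<otimes>\<^bsub>A\<^esub> b) = tgen R A eta I i a \<otimes>\<^bsub>tensor R A eta I\<^esub> tgen R A eta I i b"
      unfolding tgen_def using ring_hom_mult[OF ch] pv ab by simp
    have "?J +>\<^bsub>?P\<^esub> pvar R (i, a \<oplus>\<^bsub>A\<^esub> b) = ?J +>\<^bsub>?P\<^esub> (pvar R (i, a) \<oplus>\<^bsub>?P\<^esub> pvar R (i, b))"
      using ab i pv by (intro same_coset[OF A eta]) (auto simp: tensor_rels_def Let_def)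
    thus "tgen R A eta I i (a \<oplus>\<^bsub>A\<^esub> b) = tgen R A eta I i a \<oplus>\<^bsub>tensor R A eta I\<^esub> tgen R A eta I i b"
      unfolding tgen_def using ring_hom_add[OF ch] pv ab by simp
  next
    have "?J +>\<^bsub>?P\<^esub> pvar R (i, \<one>\<^bsub>A\<^esub>) = ?J +>\<^bsub>?P\<^esub> \<one>\<^bsub>?P\<^esub>"
      using i pv by (intro same_coset[OF A eta]) (auto simp: tensor_rels_def Let_def)
    thus "tgen R A eta I i \<one>\<^bsub>A\<^esub> = \<one>\<^bsub>tensor R A eta I\<^esub>"
      unfolding tgen_def using ring_hom_one[OF ch] by simp
  qed
  fix r assume r: "r \<in> carrier R"
  have "?J +>\<^bsub>?P\<^esub> pvar R (i, eta r) = ?J +>\<^bsub>?P\<^esub> pconst R r"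
    using i r pv ring_hom_closed[OF eta r] by (intro same_coset[OF A eta]) (auto simp: tensor_rels_def Let_def pconst_carrier)
  thus "tgen R A eta I i (eta r) = tunit R A eta I r" unfolding tgen_def tunit_def .
qed

lemma tgen_carrier:
  assumes A: "cring A" and eta: "eta \<in> ring_hom R A" and i: "i \<in> I" and a: "a \<in> carrier A"
  shows "tgen R A eta I i a \<in> carrier (tensor R A eta I)"
  using ring_hom_closed[OF tgen_hom(1)[OF A eta i] a] .

lemma tunit_carrier:
  assumes A: "cring A" and eta: "eta \<in> ring_hom R A" and r: "r \<in> carrier R"
  shows "tunit R A eta I r \<in> carrier (tensor R A eta I)"
  using ring_hom_closed[OF tunit_hom[OF A eta] r] .

end


context cring
begin

lemma tlift:
  assumes A: "cring A" and eta: "eta \<in> ring_hom R A" and S: "cring S" and c: "c \<in> ring_hom R S"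
    and v: "\<And>i. i \<in> I \<Longrightarrow> v i \<in> ring_hom A S"
    and ve: "\<And>i r. i \<in> I \<Longrightarrow> r \<in> carrier R \<Longrightarrow> v i (eta r) = c r"
  shows "tlift R S c v \<in> ring_hom (tensor R A eta I) S"
    and "\<And>i a. i \<in> I \<Longrightarrow> a \<in> carrier A \<Longrightarrow> tlift R S c v (tgen R A eta I i a) = v i a"
    and "\<And>r. r \<in> carrier R \<Longrightarrow> tlift R S c v (tunit R A eta I r) = c r"
proof -
  interpret A: cring A by fact
  interpret S: cring S by fact
  interpret P: cring "poly_ring R (I \<times> carrier A)" by (rule poly_cring)
  let ?P = "poly_ring R (I \<times> carrier A)"
  define w where "w = (\<lambda>(i, a). v i a)"
  have tl: "tlift R S c v = qlift (peval R S c w)" by (simp add: tlift_def w_def)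
  have w: "\<And>x. x \<in> I \<times> carrier A \<Longrightarrow> w x \<in> carrier S" using v by (auto intro: ring_hom_closed simp: w_def)
  have psi: "peval R S c w \<in> ring_hom ?P S" by (rule peval_hom[OF S c w])
  have pv: "\<And>i a. i \<in> I \<Longrightarrow> a \<in> carrier A \<Longrightarrow> peval R S c w (pvar R (i, a)) = v i a"
  proof -
    fix i a assume "i \<in> I" "a \<in> carrier A"
    hence "peval R S c w (pvar R (i, a)) = w (i, a)" by (intro peval_pvar[OF S c w]) auto
    thus "peval R S c w (pvar R (i, a)) = v i a" by (simp add: w_def)
  qed
  have pvc: "\<And>i a. i \<in> I \<Longrightarrow> a \<in> carrier A \<Longrightarrow> pvar R (i, a) \<in> carrier ?P" by (auto intro: pvar_carrier)
  have pc: "\<And>r. r \<in> carrier R \<Longrightarrow> peval R S c w (pconst R r) = c r" by (rule peval_pconst[OF S c, where V="I \<times> carrier A"]) (auto intro: w)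
  have vc: "\<And>i a. i \<in> I \<Longrightarrow> a \<in> carrier A \<Longrightarrow> v i a \<in> carrier S" using v by (auto intro: ring_hom_closed)
  have kill_rels: "peval R S c w x = \<zero>\<^bsub>S\<^esub>" if x: "x \<in> tensor_rels R A eta I" for x
    using x
  proof (cases rule: tensor_rels_cases)
    case (1 i a b)
    thus ?thesis using pvc vc
      by (simp add: hom_minus[OF P.is_cring S psi] ring_hom_add[OF psi] pv ring_hom_add[OF v] minus_self S.ring_axioms)
  next
    case (2 i a b)
    thus ?thesis using pvc vc
      by (simp add: hom_minus[OF P.is_cring S psi] ring_hom_mult[OF psi] pv ring_hom_mult[OF v] minus_self S.ring_axioms)
  next
    case (3 i)
    thus ?thesis using pvc vc
      by (simp add: hom_minus[OF P.is_cring S psi] ring_hom_one[OF psi] pv ring_hom_one[OF v] minus_self S.ring_axioms)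
  next
    case (4 i r)
    thus ?thesis using pvc vc ring_hom_closed[OF eta] pconst_carrier[of r "I \<times> carrier A"] ring_hom_closed[OF c]
      by (simp add: hom_minus[OF P.is_cring S psi] pv pc ve minus_self S.ring_axioms)
  qed
  have kill: "\<And>x. x \<in> tensor_ideal R A eta I \<Longrightarrow> peval R S c w x = \<zero>\<^bsub>S\<^esub>"
    unfolding tensor_ideal_def
    by (rule kill_genideal[OF P.ring_axioms S.ring_axioms psi tensor_rels_carrier[OF A eta] kill_rels])
  note J = tensor_ideal_ideal[OF A eta, of I]
  note qc = qlift_coset[OF P.ring_axioms J S.ring_axioms psi kill]
  show "tlift R S c v \<in> ring_hom (tensor R A eta I) S"
    unfolding tl tensor_def by (rule qlift_hom[OF P.ring_axioms J S.ring_axioms psi kill])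
  show "\<And>i a. i \<in> I \<Longrightarrow> a \<in> carrier A \<Longrightarrow> tlift R S c v (tgen R A eta I i a) = v i a"
    unfolding tl tgen_def using qc pvc pv by simp
  show "\<And>r. r \<in> carrier R \<Longrightarrow> tlift R S c v (tunit R A eta I r) = c r"
    unfolding tl tunit_def using qc pconst_carrier[where V="I \<times> carrier A"] pc by simp
qed


lemma tensor_unique:
  assumes A: "cring A" and eta: "eta \<in> ring_hom R A" and S: "ring S"
    and f: "f \<in> ring_hom (tensor R A eta I) S" and g: "g \<in> ring_hom (tensor R A eta I) S"
    and gen: "\<And>i a. i \<in> I \<Longrightarrow> a \<in> carrier A \<Longrightarrow> f (tgen R A eta I i a) = g (tgen R A eta I i a)"
    and unit: "\<And>r. r \<in> carrier R \<Longrightarrow> f (tunit R A eta I r) = g (tunit R A eta I r)"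
    and x: "x \<in> carrier (tensor R A eta I)"
  shows "f x = g x"
proof -
  interpret P: cring "poly_ring R (I \<times> carrier A)" by (rule poly_cring)
  let ?P = "poly_ring R (I \<times> carrier A)" and ?J = "tensor_ideal R A eta I"
  note ch = tcoset_hom[OF A eta, of I]
  have hf: "f \<circ> (+>\<^bsub>?P\<^esub>) ?J \<in> ring_hom ?P S" by (rule ring_hom_trans[OF ch f])
  have hg: "g \<circ> (+>\<^bsub>?P\<^esub>) ?J \<in> ring_hom ?P S" by (rule ring_hom_trans[OF ch g])
  have eq: "(f \<circ> (+>\<^bsub>?P\<^esub>) ?J) p = (g \<circ> (+>\<^bsub>?P\<^esub>) ?J) p" if p: "p \<in> carrier ?P" for p
  proof (rule poly_hom_unique[OF S hf hg _ _ p])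
    fix y assume "y \<in> I \<times> carrier A"
    then obtain i a where "y = (i, a)" "i \<in> I" "a \<in> carrier A" by auto
    thus "(f \<circ> (+>\<^bsub>?P\<^esub>) ?J) (pvar R y) = (g \<circ> (+>\<^bsub>?P\<^esub>) ?J) (pvar R y)"
      using gen by (simp add: tgen_def)
  next
    fix r assume "r \<in> carrier R"
    thus "(f \<circ> (+>\<^bsub>?P\<^esub>) ?J) (pconst R r) = (g \<circ> (+>\<^bsub>?P\<^esub>) ?J) (pconst R r)"
      using unit by (simp add: tunit_def)
  qed
  have "(SOME p. p \<in> x) \<in> carrier ?P \<and> x = ?J +>\<^bsub>?P\<^esub> (SOME p. p \<in> x)"
    using quot_carrier_rep[OF P.ring_axioms tensor_ideal_ideal[OF A eta] x[unfolded tensor_def]] .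
  thus ?thesis using eq by (metis comp_apply)
qed

lemma tmap_hom:
  assumes A: "cring A" and eta: "eta \<in> ring_hom R A" and A2: "cring A2" and eta2: "eta2 \<in> ring_hom R A2"
    and j: "\<And>i. i \<in> I \<Longrightarrow> j i \<in> J"
    and h: "\<And>i. i \<in> I \<Longrightarrow> h i \<in> ring_hom A A2"
    and he: "\<And>i r. i \<in> I \<Longrightarrow> r \<in> carrier R \<Longrightarrow> h i (eta r) = eta2 r"
    and sig: "\<And>i a. i \<in> I \<Longrightarrow> a \<in> carrier A \<Longrightarrow> sigma (i, a) = (j i, h i a)"
  shows "tmap R A2 eta2 J sigma \<in> ring_hom (tensor R A eta I) (tensor R A2 eta2 J)"
    and "\<And>i a. i \<in> I \<Longrightarrow> a \<in> carrier A \<Longrightarrow>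
          tmap R A2 eta2 J sigma (tgen R A eta I i a) = tgen R A2 eta2 J (j i) (h i a)"
    and "\<And>r. r \<in> carrier R \<Longrightarrow> tmap R A2 eta2 J sigma (tunit R A eta I r) = tunit R A2 eta2 J r"
proof -
  interpret P: cring "poly_ring R (I \<times> carrier A)" by (rule poly_cring)
  interpret P2: cring "poly_ring R (J \<times> carrier A2)" by (rule poly_cring)
  let ?P = "poly_ring R (I \<times> carrier A)" and ?J = "tensor_ideal R A eta I"
  let ?P2 = "poly_ring R (J \<times> carrier A2)" and ?J2 = "tensor_ideal R A2 eta2 J"
  let ?T2 = "tensor R A2 eta2 J"
  have T2: "cring ?T2" by (rule tensor_cring[OF A2 eta2])
  define v where "v = (\<lambda>i. tgen R A2 eta2 J (j i) \<circ> h i)"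
  have v: "\<And>i. i \<in> I \<Longrightarrow> v i \<in> ring_hom A ?T2"
    unfolding v_def using h j by (intro ring_hom_trans[OF _ tgen_hom(1)[OF A2 eta2]]) auto
  have ve: "\<And>i r. i \<in> I \<Longrightarrow> r \<in> carrier R \<Longrightarrow> v i (eta r) = tunit R A2 eta2 J r"
    unfolding v_def using he tgen_hom(2)[OF A2 eta2 j] by simp
  have TL1: "tlift R ?T2 (tunit R A2 eta2 J) v \<in> ring_hom (tensor R A eta I) ?T2"
    by (rule tlift(1)[OF A eta T2 tunit_hom[OF A2 eta2]]) (use v ve in auto)
  have TL2: "tlift R ?T2 (tunit R A2 eta2 J) v (tgen R A eta I i a) = v i a" if ia: "i \<in> I" "a \<in> carrier A" for i a
    by (rule tlift(2)[OF A eta T2 tunit_hom[OF A2 eta2]]) (use v ve ia in auto)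
  have TL3: "tlift R ?T2 (tunit R A2 eta2 J) v (tunit R A eta I r) = tunit R A2 eta2 J r" if r: "r \<in> carrier R" for r
    by (rule tlift(3)[OF A eta T2 tunit_hom[OF A2 eta2]]) (use v ve r in auto)
  have sigV: "sigma ` (I \<times> carrier A) \<subseteq> J \<times> carrier A2"
    using sig j ring_hom_closed[OF h] by auto
  have rho: "(+>\<^bsub>?P2\<^esub>) ?J2 \<circ> prename R sigma \<in> ring_hom ?P ?T2"
    by (rule ring_hom_trans[OF prename_hom[OF sigV] tcoset_hom[OF A2 eta2]])
  define w where "w = (\<lambda>(i, a). v i a)"
  have tl: "tlift R ?T2 (tunit R A2 eta2 J) v = qlift (peval R ?T2 (tunit R A2 eta2 J) w)" by (simp add: tlift_def w_def)
  have w: "\<And>x. x \<in> I \<times> carrier A \<Longrightarrow> w x \<in> carrier ?T2" using v by (auto intro: ring_hom_closed simp: w_def)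
  have psi: "peval R ?T2 (tunit R A2 eta2 J) w \<in> ring_hom ?P ?T2"
    by (rule peval_hom[OF T2 tunit_hom[OF A2 eta2] w])
  have agree: "tmap R A2 eta2 J sigma x = tlift R ?T2 (tunit R A2 eta2 J) v x" if x: "x \<in> carrier (tensor R A eta I)" for x
  proof -
    have rep: "(SOME p. p \<in> x) \<in> carrier ?P"
      using quot_carrier_rep[OF P.ring_axioms tensor_ideal_ideal[OF A eta] x[unfolded tensor_def]] by blast
    have "((+>\<^bsub>?P2\<^esub>) ?J2 \<circ> prename R sigma) (SOME p. p \<in> x) = peval R ?T2 (tunit R A2 eta2 J) w (SOME p. p \<in> x)"
    proof (rule poly_hom_unique[OF cring.axioms(1)[OF T2] rho psi _ _ rep])
      fix y assume "y \<in> I \<times> carrier A"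
      then obtain i a where ia: "y = (i, a)" "i \<in> I" "a \<in> carrier A" by auto
      have "peval R ?T2 (tunit R A2 eta2 J) w (pvar R (i, a)) = w (i, a)"
        using ia by (intro peval_pvar[OF T2 tunit_hom[OF A2 eta2] w]) auto
      thus "((+>\<^bsub>?P2\<^esub>) ?J2 \<circ> prename R sigma) (pvar R y) = peval R ?T2 (tunit R A2 eta2 J) w (pvar R y)"
        using ia by (simp add: prename_pvar sig w_def v_def tgen_def)
    next
      fix r assume r: "r \<in> carrier R"
      have "peval R ?T2 (tunit R A2 eta2 J) w (pconst R r) = tunit R A2 eta2 J r"
        using r by (intro peval_pconst[OF T2 tunit_hom[OF A2 eta2], where V="I \<times> carrier A"]) (auto intro: w)
      thus "((+>\<^bsub>?P2\<^esub>) ?J2 \<circ> prename R sigma) (pconst R r) = peval R ?T2 (tunit R A2 eta2 J) w (pconst R r)"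
        using r by (simp add: prename_pconst tunit_def)
    qed
    thus ?thesis by (simp add: tmap_def tl qlift_def)
  qed
  show "tmap R A2 eta2 J sigma \<in> ring_hom (tensor R A eta I) ?T2"
    by (rule ring_hom_cong[OF TL1 agree cring.axioms(1)[OF tensor_cring[OF A eta]]])
  show "\<And>i a. i \<in> I \<Longrightarrow> a \<in> carrier A \<Longrightarrow>
          tmap R A2 eta2 J sigma (tgen R A eta I i a) = tgen R A2 eta2 J (j i) (h i a)"
  proof -
    fix i a assume ia: "i \<in> I" "a \<in> carrier A"
    have "tmap R A2 eta2 J sigma (tgen R A eta I i a) = tlift R ?T2 (tunit R A2 eta2 J) v (tgen R A eta I i a)"
      by (rule agree[OF tgen_carrier[OF A eta ia]])
    also have "\<dots> = v i a" by (rule TL2[OF ia])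
    finally show "tmap R A2 eta2 J sigma (tgen R A eta I i a) = tgen R A2 eta2 J (j i) (h i a)" by (simp add: v_def)
  qed
  show "\<And>r. r \<in> carrier R \<Longrightarrow> tmap R A2 eta2 J sigma (tunit R A eta I r) = tunit R A2 eta2 J r"
  proof -
    fix r assume r: "r \<in> carrier R"
    have "tmap R A2 eta2 J sigma (tunit R A eta I r) = tlift R ?T2 (tunit R A2 eta2 J) v (tunit R A eta I r)"
      by (rule agree[OF tunit_carrier[OF A eta r]])
    also have "\<dots> = tunit R A2 eta2 J r" by (rule TL3[OF r])
    finally show "tmap R A2 eta2 J sigma (tunit R A eta I r) = tunit R A2 eta2 J r" .
  qed
qed

end


locale P25 = R: cring R + A: cring A
  for R :: "'r ring" and A :: "'a ring" +
  fixes eta :: "'r \<Rightarrow> 'a"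
    and F :: "nat \<Rightarrow> 'f set" and dF sF :: "nat \<Rightarrow> nat \<Rightarrow> 'f \<Rightarrow> 'f"
    and B :: "nat \<Rightarrow> 'b set" and dB sB :: "nat \<Rightarrow> nat \<Rightarrow> 'b \<Rightarrow> 'b"
    and G :: "nat \<Rightarrow> 'g monoid" and dG sG :: "nat \<Rightarrow> nat \<Rightarrow> 'g \<Rightarrow> 'g"
    and act :: "nat \<Rightarrow> 'g \<Rightarrow> 'f \<Rightarrow> 'f" and tau :: "nat \<Rightarrow> 'b \<Rightarrow> 'g"
  assumes Fs: "finite_simp_set F dF sF"
    and Bs: "finite_simp_set B dB sB"
    and acts: "simp_action G dG sG F dF sF act"
    and tw: "twisting_function G dG sG B dB sB tau"
    and eta: "eta \<in> ring_hom R A"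
begin

abbreviation "CC n \<equiv> tensor R A eta (F n)"
abbreviation "eC n \<equiv> tunit R A eta (F n)"
abbreviation "T1 n \<equiv> tensor R A eta (F n \<times> B n)"
abbreviation "T2 n \<equiv> tensor R (CC n) (eC n) (B n)"
abbreviation "Phi n \<equiv> tmap R (CC n) (eC n) (B n) (\<lambda>((f, b), a). (b, tgen R A eta (F n) f a))"
abbreviation "iota n b \<equiv> tmap R A eta (F n \<times> B n) (\<lambda>(f, a). ((f, b), a))"
abbreviation "Psi n \<equiv> tlift R (T1 n) (tunit R A eta (F n \<times> B n)) (iota n)"

lemma dF_in: "0 < n \<Longrightarrow> i \<le> n \<Longrightarrow> f \<in> F n \<Longrightarrow> dF n i f \<in> F (n - 1)"
  using Fs by (simp add: finite_simp_set_def simp_set_def)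
lemma sF_in: "i \<le> n \<Longrightarrow> f \<in> F n \<Longrightarrow> sF n i f \<in> F (Suc n)"
  using Fs by (simp add: finite_simp_set_def simp_set_def)
lemma dB_in: "0 < n \<Longrightarrow> i \<le> n \<Longrightarrow> b \<in> B n \<Longrightarrow> dB n i b \<in> B (n - 1)"
  using Bs by (simp add: finite_simp_set_def simp_set_def)
lemma sB_in: "i \<le> n \<Longrightarrow> b \<in> B n \<Longrightarrow> sB n i b \<in> B (Suc n)"
  using Bs by (simp add: finite_simp_set_def simp_set_def)
lemma act_in: "g \<in> carrier (G n) \<Longrightarrow> f \<in> F n \<Longrightarrow> act n g f \<in> F n"
  using acts by (simp add: simp_action_def)
lemma tau_in: "0 < q \<Longrightarrow> b \<in> B q \<Longrightarrow> tau q b \<in> carrier (G (q - 1))"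
  using tw by (simp add: twisting_function_def)

lemma CC_cring: "cring (CC n)" by (rule R.tensor_cring[OF A.is_cring eta])
lemma eC_hom: "eC n \<in> ring_hom R (CC n)" by (rule R.tunit_hom[OF A.is_cring eta])
lemma T1_cring: "cring (T1 n)" by (rule R.tensor_cring[OF A.is_cring eta])
lemma T2_cring: "cring (T2 n)" by (rule R.tensor_cring[OF CC_cring eC_hom])

lemma Phi:
  shows "Phi n \<in> ring_hom (T1 n) (T2 n)"
    and "\<And>f b a. f \<in> F n \<Longrightarrow> b \<in> B n \<Longrightarrow> a \<in> carrier A \<Longrightarrow>
          Phi n (tgen R A eta (F n \<times> B n) (f, b) a) = tgen R (CC n) (eC n) (B n) b (tgen R A eta (F n) f a)"
    and "\<And>r. r \<in> carrier R \<Longrightarrow> Phi n (tunit R A eta (F n \<times> B n) r) = tunit R (CC n) (eC n) (B n) r"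
proof -
  note hyps = A.is_cring eta CC_cring eC_hom
  have j: "\<And>x. x \<in> F n \<times> B n \<Longrightarrow> snd x \<in> B n" by auto
  have h: "\<And>x. x \<in> F n \<times> B n \<Longrightarrow> tgen R A eta (F n) (fst x) \<in> ring_hom A (CC n)"
    by (auto intro: R.tgen_hom(1)[OF A.is_cring eta])
  have he: "\<And>x r. x \<in> F n \<times> B n \<Longrightarrow> r \<in> carrier R \<Longrightarrow> tgen R A eta (F n) (fst x) (eta r) = eC n r"
    using R.tgen_hom(2)[OF A.is_cring eta] by (metis mem_Sigma_iff prod.collapse)
  have sig: "\<And>x a. x \<in> F n \<times> B n \<Longrightarrow> a \<in> carrier A \<Longrightarrow>
     (\<lambda>((f, b), a). (b, tgen R A eta (F n) f a)) (x, a) = (snd x, tgen R A eta (F n) (fst x) a)"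
    by auto
  note T = R.tmap_hom[OF hyps, where j = snd and h = "\<lambda>x. tgen R A eta (F n) (fst x)", OF j h he sig]
  show "Phi n \<in> ring_hom (T1 n) (T2 n)" by (rule T(1))
  show "\<And>f b a. f \<in> F n \<Longrightarrow> b \<in> B n \<Longrightarrow> a \<in> carrier A \<Longrightarrow>
          Phi n (tgen R A eta (F n \<times> B n) (f, b) a) = tgen R (CC n) (eC n) (B n) b (tgen R A eta (F n) f a)"
    using T(2) by fastforce
  show "\<And>r. r \<in> carrier R \<Longrightarrow> Phi n (tunit R A eta (F n \<times> B n) r) = tunit R (CC n) (eC n) (B n) r"
    using T(3) by blast
qed


lemma iota:
  assumes b: "b \<in> B n"
  shows "iota n b \<in> ring_hom (CC n) (T1 n)"
    and "\<And>f a. f \<in> F n \<Longrightarrow> a \<in> carrier A \<Longrightarrow> iota n b (tgen R A eta (F n) f a) = tgen R A eta (F n \<times> B n) (f, b) a"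
    and "\<And>r. r \<in> carrier R \<Longrightarrow> iota n b (eC n r) = tunit R A eta (F n \<times> B n) r"
proof -
  note hyps = A.is_cring eta A.is_cring eta
  have j: "\<And>f. f \<in> F n \<Longrightarrow> (f, b) \<in> F n \<times> B n" using b by auto
  have h: "\<And>f. f \<in> F n \<Longrightarrow> id \<in> ring_hom A A" by (rule id_ring_hom)
  have he: "\<And>f r. f \<in> F n \<Longrightarrow> r \<in> carrier R \<Longrightarrow> id (eta r) = eta r" by simp
  have sig: "\<And>f a. f \<in> F n \<Longrightarrow> a \<in> carrier A \<Longrightarrow> (\<lambda>(f, a). ((f, b), a)) (f, a) = ((f, b), id a)" by simp
  show "iota n b \<in> ring_hom (CC n) (T1 n)"
    by (rule R.tmap_hom(1)[OF hyps, where j = "\<lambda>f. (f, b)" and h = "\<lambda>_. id"]) (use j h he sig in auto)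
  show "\<And>f a. f \<in> F n \<Longrightarrow> a \<in> carrier A \<Longrightarrow> iota n b (tgen R A eta (F n) f a) = tgen R A eta (F n \<times> B n) (f, b) a"
  proof -
    fix f a assume fa: "f \<in> F n" "a \<in> carrier A"
    have "iota n b (tgen R A eta (F n) f a) = tgen R A eta (F n \<times> B n) (f, b) (id a)"
      by (rule R.tmap_hom(2)[OF hyps, where j = "\<lambda>f. (f, b)" and h = "\<lambda>_. id"]) (use j h he sig fa in auto)
    thus "iota n b (tgen R A eta (F n) f a) = tgen R A eta (F n \<times> B n) (f, b) a" by simp
  qed
  show "\<And>r. r \<in> carrier R \<Longrightarrow> iota n b (eC n r) = tunit R A eta (F n \<times> B n) r"
    by (rule R.tmap_hom(3)[OF hyps, where j = "\<lambda>f. (f, b)" and h = "\<lambda>_. id"]) (use j h he sig in auto)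
qed

lemma Psi:
  shows "Psi n \<in> ring_hom (T2 n) (T1 n)"
    and "\<And>b c. b \<in> B n \<Longrightarrow> c \<in> carrier (CC n) \<Longrightarrow> Psi n (tgen R (CC n) (eC n) (B n) b c) = iota n b c"
    and "\<And>r. r \<in> carrier R \<Longrightarrow> Psi n (tunit R (CC n) (eC n) (B n) r) = tunit R A eta (F n \<times> B n) r"
proof -
  have v: "\<And>b. b \<in> B n \<Longrightarrow> iota n b \<in> ring_hom (CC n) (T1 n)" by (rule iota(1))
  have ve: "\<And>b r. b \<in> B n \<Longrightarrow> r \<in> carrier R \<Longrightarrow> iota n b (eC n r) = tunit R A eta (F n \<times> B n) r"
    by (rule iota(3))
  note hyps = CC_cring eC_hom T1_cring R.tunit_hom[OF A.is_cring eta]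
  show "Psi n \<in> ring_hom (T2 n) (T1 n)"
    by (rule R.tlift(1)[OF hyps]) (use v ve in auto)
  show "\<And>b c. b \<in> B n \<Longrightarrow> c \<in> carrier (CC n) \<Longrightarrow> Psi n (tgen R (CC n) (eC n) (B n) b c) = iota n b c"
    by (rule R.tlift(2)[OF hyps]) (use v ve in auto)
  show "\<And>r. r \<in> carrier R \<Longrightarrow> Psi n (tunit R (CC n) (eC n) (B n) r) = tunit R A eta (F n \<times> B n) r"
    by (rule R.tlift(3)[OF hyps]) (use v ve in auto)
qed

lemma Phi_iso: "Phi n \<in> ring_iso (T1 n) (T2 n)"
proof -
  have PsiPhi: "Psi n (Phi n x) = x" if x: "x \<in> carrier (T1 n)" for x
  proof -
    have "(Psi n \<circ> Phi n) x = id x"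
    proof (rule R.tensor_unique[OF A.is_cring eta cring.axioms(1)[OF T1_cring] _ id_ring_hom _ _ x])
      show "Psi n \<circ> Phi n \<in> ring_hom (T1 n) (T1 n)" by (rule ring_hom_trans[OF Phi(1) Psi(1)])
    next
      fix y a assume y: "y \<in> F n \<times> B n" and a: "a \<in> carrier A"
      then obtain f b where fb: "y = (f, b)" "f \<in> F n" "b \<in> B n" by auto
      show "(Psi n \<circ> Phi n) (tgen R A eta (F n \<times> B n) y a) = id (tgen R A eta (F n \<times> B n) y a)"
        using fb a by (simp add: Phi(2) Psi(2) iota(2) R.tgen_carrier[OF A.is_cring eta])
    next
      fix r assume r: "r \<in> carrier R"
      show "(Psi n \<circ> Phi n) (tunit R A eta (F n \<times> B n) r) = id (tunit R A eta (F n \<times> B n) r)"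
        using r by (simp add: Phi(3) Psi(3))
    qed
    thus ?thesis by simp
  qed
  have PhiIota: "Phi n (iota n b c) = tgen R (CC n) (eC n) (B n) b c" if b: "b \<in> B n" and c: "c \<in> carrier (CC n)" for b c
  proof -
    have "(Phi n \<circ> iota n b) c = tgen R (CC n) (eC n) (B n) b c"
    proof (rule R.tensor_unique[OF A.is_cring eta cring.axioms(1)[OF T2_cring] _ _ _ _ c])
      show "Phi n \<circ> iota n b \<in> ring_hom (CC n) (T2 n)" by (rule ring_hom_trans[OF iota(1)[OF b] Phi(1)])
      show "tgen R (CC n) (eC n) (B n) b \<in> ring_hom (CC n) (T2 n)" by (rule R.tgen_hom(1)[OF CC_cring eC_hom b])
    next
      fix f a assume f: "f \<in> F n" and a: "a \<in> carrier A"
      show "(Phi n \<circ> iota n b) (tgen R A eta (F n) f a) = tgen R (CC n) (eC n) (B n) b (tgen R A eta (F n) f a)"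
        using f a b by (simp add: iota(2) Phi(2))
    next
      fix r assume r: "r \<in> carrier R"
      show "(Phi n \<circ> iota n b) (eC n r) = tgen R (CC n) (eC n) (B n) b (eC n r)"
        using r b by (simp add: iota(3) Phi(3) R.tgen_hom(2)[OF CC_cring eC_hom b])
    qed
    thus ?thesis by simp
  qed
  have PhiPsi: "Phi n (Psi n y) = y" if y: "y \<in> carrier (T2 n)" for y
  proof -
    have "(Phi n \<circ> Psi n) y = id y"
    proof (rule R.tensor_unique[OF CC_cring eC_hom cring.axioms(1)[OF T2_cring] _ id_ring_hom _ _ y])
      show "Phi n \<circ> Psi n \<in> ring_hom (T2 n) (T2 n)" by (rule ring_hom_trans[OF Psi(1) Phi(1)])
    next
      fix b c assume b: "b \<in> B n" and c: "c \<in> carrier (CC n)"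
      show "(Phi n \<circ> Psi n) (tgen R (CC n) (eC n) (B n) b c) = id (tgen R (CC n) (eC n) (B n) b c)"
        using b c by (simp add: Psi(2) PhiIota)
    next
      fix r assume r: "r \<in> carrier R"
      show "(Phi n \<circ> Psi n) (tunit R (CC n) (eC n) (B n) r) = id (tunit R (CC n) (eC n) (B n) r)"
        using r by (simp add: Phi(3) Psi(3))
    qed
    thus ?thesis by simp
  qed
  have "bij_betw (Phi n) (carrier (T1 n)) (carrier (T2 n))"
  proof (rule bij_betw_byWitness[where f' = "Psi n"])
    show "\<forall>a\<in>carrier (T1 n). Psi n (Phi n a) = a" using PsiPhi by blast
    show "\<forall>a\<in>carrier (T2 n). Phi n (Psi n a) = a" using PhiPsi by blast
    show "Phi n ` carrier (T1 n) \<subseteq> carrier (T2 n)" using ring_hom_closed[OF Phi(1)] by blast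
    show "Psi n ` carrier (T2 n) \<subseteq> carrier (T1 n)" using ring_hom_closed[OF Psi(1)] by blast
  qed
  thus ?thesis using Phi(1) by (simp add: ring_iso_def)
qed


lemma lmap:
  assumes d: "\<And>x. x \<in> Xs \<Longrightarrow> d x \<in> Ys"
  shows "tmap R A eta Ys (\<lambda>(x, a). (d x, a)) \<in> ring_hom (tensor R A eta Xs) (tensor R A eta Ys)"
    and "\<And>x a. x \<in> Xs \<Longrightarrow> a \<in> carrier A \<Longrightarrow> tmap R A eta Ys (\<lambda>(x, a). (d x, a)) (tgen R A eta Xs x a) = tgen R A eta Ys (d x) a"
    and "\<And>r. r \<in> carrier R \<Longrightarrow> tmap R A eta Ys (\<lambda>(x, a). (d x, a)) (tunit R A eta Xs r) = tunit R A eta Ys r"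
proof -
  note hyps = A.is_cring eta A.is_cring eta
  have h: "\<And>x. x \<in> Xs \<Longrightarrow> id \<in> ring_hom A A" by (rule id_ring_hom)
  have he: "\<And>x r. x \<in> Xs \<Longrightarrow> r \<in> carrier R \<Longrightarrow> id (eta r) = eta r" by simp
  have sig: "\<And>x a. x \<in> Xs \<Longrightarrow> a \<in> carrier A \<Longrightarrow> (\<lambda>(x, a). (d x, a)) (x, a) = (d x, id a)" by simp
  show "tmap R A eta Ys (\<lambda>(x, a). (d x, a)) \<in> ring_hom (tensor R A eta Xs) (tensor R A eta Ys)"
    by (rule R.tmap_hom(1)[OF hyps, where j = d and h = "\<lambda>_. id"]) (use d h he sig in auto)
  show "\<And>x a. x \<in> Xs \<Longrightarrow> a \<in> carrier A \<Longrightarrow> tmap R A eta Ys (\<lambda>(x, a). (d x, a)) (tgen R A eta Xs x a) = tgen R A eta Ys (d x) a"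
  proof -
    fix x a assume xa: "x \<in> Xs" "a \<in> carrier A"
    have "tmap R A eta Ys (\<lambda>(x, a). (d x, a)) (tgen R A eta Xs x a) = tgen R A eta Ys (d x) (id a)"
      by (rule R.tmap_hom(2)[OF hyps, where j = d and h = "\<lambda>_. id"]) (use d h he sig xa in auto)
    thus "tmap R A eta Ys (\<lambda>(x, a). (d x, a)) (tgen R A eta Xs x a) = tgen R A eta Ys (d x) a" by simp
  qed
  show "\<And>r. r \<in> carrier R \<Longrightarrow> tmap R A eta Ys (\<lambda>(x, a). (d x, a)) (tunit R A eta Xs r) = tunit R A eta Ys r"
    by (rule R.tmap_hom(3)[OF hyps, where j = d and h = "\<lambda>_. id"]) (use d h he sig in auto)
qed

lemma compat:
  assumes e: "\<And>f b. f \<in> F n \<Longrightarrow> b \<in> B n \<Longrightarrow> e (f, b) = (ef f b, eb b)"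
    and ef: "\<And>f b. f \<in> F n \<Longrightarrow> b \<in> B n \<Longrightarrow> ef f b \<in> F m"
    and eb: "\<And>b. b \<in> B n \<Longrightarrow> eb b \<in> B m"
    and hb: "\<And>b. b \<in> B n \<Longrightarrow> hb b \<in> ring_hom (CC n) (CC m)"
    and hbe: "\<And>b r. b \<in> B n \<Longrightarrow> r \<in> carrier R \<Longrightarrow> hb b (eC n r) = eC m r"
    and hbg: "\<And>b f a. b \<in> B n \<Longrightarrow> f \<in> F n \<Longrightarrow> a \<in> carrier A \<Longrightarrow>
               hb b (tgen R A eta (F n) f a) = tgen R A eta (F m) (ef f b) a"
    and x: "x \<in> carrier (T1 n)"
  shows "Phi m (tmap R A eta (F m \<times> B m) (\<lambda>(x, a). (e x, a)) x) =
         tmap R (CC m) (eC m) (B m) (\<lambda>(b, c). (eb b, hb b c)) (Phi n x)"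
proof -
  have ein: "\<And>y. y \<in> F n \<times> B n \<Longrightarrow> e y \<in> F m \<times> B m" using e ef eb by auto
  have L1: "tmap R A eta (F m \<times> B m) (\<lambda>(x, a). (e x, a)) \<in> ring_hom (T1 n) (T1 m)"
    by (rule lmap(1)) (use ein in auto)
  have L2: "tmap R A eta (F m \<times> B m) (\<lambda>(x, a). (e x, a)) (tgen R A eta (F n \<times> B n) y a) = tgen R A eta (F m \<times> B m) (e y) a"
    if "y \<in> F n \<times> B n" "a \<in> carrier A" for y a
    by (rule lmap(2)) (use ein that in auto)
  have L3: "tmap R A eta (F m \<times> B m) (\<lambda>(x, a). (e x, a)) (tunit R A eta (F n \<times> B n) r) = tunit R A eta (F m \<times> B m) r"
    if "r \<in> carrier R" for r
    by (rule lmap(3)) (use ein that in auto)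
  note hyps = CC_cring eC_hom CC_cring eC_hom
  have sig: "\<And>b c. b \<in> B n \<Longrightarrow> c \<in> carrier (CC n) \<Longrightarrow> (\<lambda>(b, c). (eb b, hb b c)) (b, c) = (eb b, hb b c)" by simp
  have TW1: "tmap R (CC m) (eC m) (B m) (\<lambda>(b, c). (eb b, hb b c)) \<in> ring_hom (T2 n) (T2 m)"
    by (rule R.tmap_hom(1)[OF hyps, where j = eb and h = hb]) (use eb hb hbe sig in auto)
  have TW2: "tmap R (CC m) (eC m) (B m) (\<lambda>(b, c). (eb b, hb b c)) (tgen R (CC n) (eC n) (B n) b c) =
      tgen R (CC m) (eC m) (B m) (eb b) (hb b c)" if bc: "b \<in> B n" "c \<in> carrier (CC n)" for b c
    by (rule R.tmap_hom(2)[OF hyps, where j = eb and h = hb]) (use eb hb hbe sig bc in auto)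
  have TW3: "tmap R (CC m) (eC m) (B m) (\<lambda>(b, c). (eb b, hb b c)) (tunit R (CC n) (eC n) (B n) r) =
      tunit R (CC m) (eC m) (B m) r" if r: "r \<in> carrier R" for r
    by (rule R.tmap_hom(3)[OF hyps, where j = eb and h = hb]) (use eb hb hbe sig r in auto)
  have "(Phi m \<circ> tmap R A eta (F m \<times> B m) (\<lambda>(x, a). (e x, a))) x =
        (tmap R (CC m) (eC m) (B m) (\<lambda>(b, c). (eb b, hb b c)) \<circ> Phi n) x"
  proof (rule R.tensor_unique[OF A.is_cring eta cring.axioms(1)[OF T2_cring] _ _ _ _ x])
    show "Phi m \<circ> tmap R A eta (F m \<times> B m) (\<lambda>(x, a). (e x, a)) \<in> ring_hom (T1 n) (T2 m)"
      by (rule ring_hom_trans[OF L1 Phi(1)])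
    show "tmap R (CC m) (eC m) (B m) (\<lambda>(b, c). (eb b, hb b c)) \<circ> Phi n \<in> ring_hom (T1 n) (T2 m)"
      by (rule ring_hom_trans[OF Phi(1) TW1])
  next
    fix y a assume y: "y \<in> F n \<times> B n" and a: "a \<in> carrier A"
    then obtain f b where fb: "y = (f, b)" "f \<in> F n" "b \<in> B n" by auto
    have gc: "tgen R A eta (F n) f a \<in> carrier (CC n)" by (rule R.tgen_carrier[OF A.is_cring eta fb(2) a])
    have "(Phi m \<circ> tmap R A eta (F m \<times> B m) (\<lambda>(x, a). (e x, a))) (tgen R A eta (F n \<times> B n) y a)
        = Phi m (tgen R A eta (F m \<times> B m) (ef f b, eb b) a)"
      using L2[OF y a] fb e by simp
    also have "\<dots> = tgen R (CC m) (eC m) (B m) (eb b) (tgen R A eta (F m) (ef f b) a)"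
      by (rule Phi(2)[OF ef[OF fb(2,3)] eb[OF fb(3)] a])
    also have "\<dots> = tmap R (CC m) (eC m) (B m) (\<lambda>(b, c). (eb b, hb b c)) (tgen R (CC n) (eC n) (B n) b (tgen R A eta (F n) f a))"
      using TW2[OF fb(3) gc] hbg[OF fb(3,2) a] by simp
    also have "\<dots> = (tmap R (CC m) (eC m) (B m) (\<lambda>(b, c). (eb b, hb b c)) \<circ> Phi n) (tgen R A eta (F n \<times> B n) y a)"
      using Phi(2)[OF fb(2,3) a] fb by simp
    finally show "(Phi m \<circ> tmap R A eta (F m \<times> B m) (\<lambda>(x, a). (e x, a))) (tgen R A eta (F n \<times> B n) y a) =
        (tmap R (CC m) (eC m) (B m) (\<lambda>(b, c). (eb b, hb b c)) \<circ> Phi n) (tgen R A eta (F n \<times> B n) y a)" .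
  next
    fix r assume r: "r \<in> carrier R"
    show "(Phi m \<circ> tmap R A eta (F m \<times> B m) (\<lambda>(x, a). (e x, a))) (tunit R A eta (F n \<times> B n) r) =
        (tmap R (CC m) (eC m) (B m) (\<lambda>(b, c). (eb b, hb b c)) \<circ> Phi n) (tunit R A eta (F n \<times> B n) r)"
      using L3[OF r] Phi(3)[OF r] Phi(3)[OF r, of m] TW3[OF r] by simp
  qed
  thus ?thesis by simp
qed


abbreviation "actm m g \<equiv> tmap R A eta (F m) (\<lambda>(f, a). (act m g f, a))"
abbreviation "dCm n i \<equiv> tmap R A eta (F (n - 1)) (\<lambda>(x, a). (dF n i x, a))"
abbreviation "sCm n i \<equiv> tmap R A eta (F (Suc n)) (\<lambda>(x, a). (sF n i x, a))"

lemma face: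
  assumes n: "0 < n" and i: "i \<le> n" and x: "x \<in> carrier (T1 n)"
  shows "Phi (n - 1) (tmap R A eta (F (n - 1) \<times> B (n - 1)) (\<lambda>(x, a). (tcp_face act tau dF dB n i x, a)) x) =
    (if i = 0 then tmap R (CC (n - 1)) (eC (n - 1)) (B (n - 1)) (\<lambda>(b, c). (dB n 0 b, actm (n - 1) (tau n b) (dCm n 0 c)))
     else tmap R (CC (n - 1)) (eC (n - 1)) (B (n - 1)) (\<lambda>(b, c). (dB n i b, dCm n i c))) (Phi n x)"
proof (cases "i = 0")
  case True
  have dC1: "dCm n 0 \<in> ring_hom (CC n) (CC (n - 1))" by (rule lmap(1)) (use n dF_in in auto)
  have dC2: "dCm n 0 (tgen R A eta (F n) f a) = tgen R A eta (F (n - 1)) (dF n 0 f) a" if "f \<in> F n" "a \<in> carrier A" for f a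
    by (rule lmap(2)) (use n dF_in that in auto)
  have dC3: "dCm n 0 (eC n r) = eC (n - 1) r" if "r \<in> carrier R" for r
    by (rule lmap(3)) (use n dF_in that in auto)
  have g: "tau n b \<in> carrier (G (n - 1))" if "b \<in> B n" for b using tau_in n that by blast
  have a1: "actm (n - 1) (tau n b) \<in> ring_hom (CC (n - 1)) (CC (n - 1))" if b: "b \<in> B n" for b
    by (rule lmap(1)) (use act_in g[OF b] in auto)
  have a2: "actm (n - 1) (tau n b) (tgen R A eta (F (n - 1)) f a) = tgen R A eta (F (n - 1)) (act (n - 1) (tau n b) f) a"
    if b: "b \<in> B n" and "f \<in> F (n - 1)" "a \<in> carrier A" for b f a
    by (rule lmap(2)) (use act_in g[OF b] that in auto)
  have a3: "actm (n - 1) (tau n b) (eC (n - 1) r) = eC (n - 1) r" if b: "b \<in> B n" and "r \<in> carrier R" for b r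
    by (rule lmap(3)) (use act_in g[OF b] that in auto)
  have "Phi (n - 1) (tmap R A eta (F (n - 1) \<times> B (n - 1)) (\<lambda>(x, a). (tcp_face act tau dF dB n 0 x, a)) x) =
    tmap R (CC (n - 1)) (eC (n - 1)) (B (n - 1)) (\<lambda>(b, c). (dB n 0 b, (\<lambda>b c. actm (n - 1) (tau n b) (dCm n 0 c)) b c)) (Phi n x)"
  proof (rule compat[where ef = "\<lambda>f b. act (n - 1) (tau n b) (dF n 0 f)" and eb = "dB n 0"])
    show "\<And>f b. f \<in> F n \<Longrightarrow> b \<in> B n \<Longrightarrow> tcp_face act tau dF dB n 0 (f, b) = (act (n - 1) (tau n b) (dF n 0 f), dB n 0 b)"
      by (simp add: tcp_face_def)
    show "\<And>f b. f \<in> F n \<Longrightarrow> b \<in> B n \<Longrightarrow> act (n - 1) (tau n b) (dF n 0 f) \<in> F (n - 1)"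
      using act_in g dF_in n by blast
    show "\<And>b. b \<in> B n \<Longrightarrow> dB n 0 b \<in> B (n - 1)" using dB_in n by blast
    show "\<And>b. b \<in> B n \<Longrightarrow> (\<lambda>c. actm (n - 1) (tau n b) (dCm n 0 c)) \<in> ring_hom (CC n) (CC (n - 1))"
      using ring_hom_trans[OF dC1 a1] by (simp add: comp_def)
    show "\<And>b r. b \<in> B n \<Longrightarrow> r \<in> carrier R \<Longrightarrow> actm (n - 1) (tau n b) (dCm n 0 (eC n r)) = eC (n - 1) r"
      using dC3 a3 by simp
    show "\<And>b f a. b \<in> B n \<Longrightarrow> f \<in> F n \<Longrightarrow> a \<in> carrier A \<Longrightarrow>
        actm (n - 1) (tau n b) (dCm n 0 (tgen R A eta (F n) f a)) = tgen R A eta (F (n - 1)) (act (n - 1) (tau n b) (dF n 0 f)) a"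
      using dC2 a2 dF_in n by simp
  qed (rule x)
  thus ?thesis using True by simp
next
  case False
  have dC1: "dCm n i \<in> ring_hom (CC n) (CC (n - 1))" by (rule lmap(1)) (use n i dF_in in auto)
  have dC2: "dCm n i (tgen R A eta (F n) f a) = tgen R A eta (F (n - 1)) (dF n i f) a" if "f \<in> F n" "a \<in> carrier A" for f a
    by (rule lmap(2)) (use n i dF_in that in auto)
  have dC3: "dCm n i (eC n r) = eC (n - 1) r" if "r \<in> carrier R" for r
    by (rule lmap(3)) (use n i dF_in that in auto)
  have "Phi (n - 1) (tmap R A eta (F (n - 1) \<times> B (n - 1)) (\<lambda>(x, a). (tcp_face act tau dF dB n i x, a)) x) =
    tmap R (CC (n - 1)) (eC (n - 1)) (B (n - 1)) (\<lambda>(b, c). (dB n i b, (\<lambda>b c. dCm n i c) b c)) (Phi n x)"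
  proof (rule compat[where ef = "\<lambda>f b. dF n i f" and eb = "dB n i"])
    show "\<And>f b. f \<in> F n \<Longrightarrow> b \<in> B n \<Longrightarrow> tcp_face act tau dF dB n i (f, b) = (dF n i f, dB n i b)"
      using False by (simp add: tcp_face_def)
    show "\<And>f b. f \<in> F n \<Longrightarrow> b \<in> B n \<Longrightarrow> dF n i f \<in> F (n - 1)" using dF_in n i by blast
    show "\<And>b. b \<in> B n \<Longrightarrow> dB n i b \<in> B (n - 1)" using dB_in n i by blast
    show "\<And>b. b \<in> B n \<Longrightarrow> dCm n i \<in> ring_hom (CC n) (CC (n - 1))" using dC1 by blast
    show "\<And>b r. b \<in> B n \<Longrightarrow> r \<in> carrier R \<Longrightarrow> dCm n i (eC n r) = eC (n - 1) r" using dC3 by blast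
    show "\<And>b f a. b \<in> B n \<Longrightarrow> f \<in> F n \<Longrightarrow> a \<in> carrier A \<Longrightarrow>
        dCm n i (tgen R A eta (F n) f a) = tgen R A eta (F (n - 1)) (dF n i f) a" using dC2 by blast
  qed (rule x)
  thus ?thesis using False by simp
qed

lemma degen:
  assumes i: "i \<le> n" and x: "x \<in> carrier (T1 n)"
  shows "Phi (Suc n) (tmap R A eta (F (Suc n) \<times> B (Suc n)) (\<lambda>(x, a). (tcp_degen sF sB n i x, a)) x) =
    tmap R (CC (Suc n)) (eC (Suc n)) (B (Suc n)) (\<lambda>(b, c). (sB n i b, sCm n i c)) (Phi n x)"
proof -
  have sC1: "sCm n i \<in> ring_hom (CC n) (CC (Suc n))" by (rule lmap(1)) (use i sF_in in auto)
  have sC2: "sCm n i (tgen R A eta (F n) f a) = tgen R A eta (F (Suc n)) (sF n i f) a" if "f \<in> F n" "a \<in> carrier A" for f a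
    by (rule lmap(2)) (use i sF_in that in auto)
  have sC3: "sCm n i (eC n r) = eC (Suc n) r" if "r \<in> carrier R" for r
    by (rule lmap(3)) (use i sF_in that in auto)
  have "Phi (Suc n) (tmap R A eta (F (Suc n) \<times> B (Suc n)) (\<lambda>(x, a). (tcp_degen sF sB n i x, a)) x) =
    tmap R (CC (Suc n)) (eC (Suc n)) (B (Suc n)) (\<lambda>(b, c). (sB n i b, (\<lambda>b c. sCm n i c) b c)) (Phi n x)"
  proof (rule compat[where ef = "\<lambda>f b. sF n i f" and eb = "sB n i"])
    show "\<And>f b. f \<in> F n \<Longrightarrow> b \<in> B n \<Longrightarrow> tcp_degen sF sB n i (f, b) = (sF n i f, sB n i b)"
      by (simp add: tcp_degen_def)
    show "\<And>f b. f \<in> F n \<Longrightarrow> b \<in> B n \<Longrightarrow> sF n i f \<in> F (Suc n)" using sF_in i by blast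
    show "\<And>b. b \<in> B n \<Longrightarrow> sB n i b \<in> B (Suc n)" using sB_in i by blast
    show "\<And>b. b \<in> B n \<Longrightarrow> sCm n i \<in> ring_hom (CC n) (CC (Suc n))" using sC1 by blast
    show "\<And>b r. b \<in> B n \<Longrightarrow> r \<in> carrier R \<Longrightarrow> sCm n i (eC n r) = eC (Suc n) r" using sC3 by blast
    show "\<And>b f a. b \<in> B n \<Longrightarrow> f \<in> F n \<Longrightarrow> a \<in> carrier A \<Longrightarrow>
        sCm n i (tgen R A eta (F n) f a) = tgen R A eta (F (Suc n)) (sF n i f) a" using sC2 by blast
  qed (rule x)
  thus ?thesis by simp
qed

end


theorem proposition2p5:
  fixes R :: "'r ring" and A :: "'a ring" and eta :: "'r \<Rightarrow> 'a"
    and F :: "nat \<Rightarrow> 'f set" and dF sF :: "nat \<Rightarrow> nat \<Rightarrow> 'f \<Rightarrow> 'f"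
    and B :: "nat \<Rightarrow> 'b set" and dB sB :: "nat \<Rightarrow> nat \<Rightarrow> 'b \<Rightarrow> 'b"
    and G :: "nat \<Rightarrow> 'g monoid" and dG sG :: "nat \<Rightarrow> nat \<Rightarrow> 'g \<Rightarrow> 'g"
    and act :: "nat \<Rightarrow> 'g \<Rightarrow> 'f \<Rightarrow> 'f" and tau :: "nat \<Rightarrow> 'b \<Rightarrow> 'g"
  assumes "finite_simp_set F dF sF"
    and "finite_simp_set B dB sB"
    and "simp_group G dG sG"
    and "simp_action G dG sG F dF sF act"
    and "twisting_function G dG sG B dB sB tau"
    and "cring R" and "cring A" and "eta \<in> ring_hom R A"
  defines "E \<equiv> tcp_set F B"
    and "dE \<equiv> tcp_face act tau dF dB"
    and "sE \<equiv> tcp_degen sF sB"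
    and "C \<equiv> loday R A eta F"
    and "etaC \<equiv> \<lambda>n. tunit R A eta (F n)"
    and "dC \<equiv> loday_face R A eta F dF"
    and "sC \<equiv> loday_degen R A eta F sF"
    and "actC \<equiv> loday_act R A eta F act"
  shows "\<exists>Phi. \<forall>n.
     Phi n \<in> ring_iso (loday R A eta E n) (twloday R C etaC B n) \<and>
     (\<forall>r\<in>carrier R. Phi n (tunit R A eta (E n) r) = tunit R (C n) (etaC n) (B n) r) \<and>
     (\<forall>i\<le>n. 0 < n \<longrightarrow> (\<forall>x\<in>carrier (loday R A eta E n).
        Phi (n - 1) (loday_face R A eta E dE n i x) =
        twloday_face R C etaC dC actC B dB tau n i (Phi n x))) \<and>
     (\<forall>i\<le>n. \<forall>x\<in>carrier (loday R A eta E n).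
        Phi (Suc n) (loday_degen R A eta E sE n i x) =
        twloday_degen R C etaC sC B sB n i (Phi n x)) \<and>
     (\<forall>f\<in>F n. \<forall>b\<in>B n. \<forall>a\<in>carrier A.
        Phi n (tgen R A eta (E n) (f, b) a) = tgen R (C n) (etaC n) (B n) b (tgen R A eta (F n) f a))"
proof -
  interpret P: P25 R A eta F dF sF B dB sB G dG sG act tau
    by (intro P25.intro P25_axioms.intro) (use assms in auto)
  show ?thesis
    unfolding E_def dE_def sE_def C_def etaC_def dC_def sC_def actC_def
      loday_def twloday_def tcp_set_def loday_face_def loday_degen_def twloday_face_def twloday_degen_def loday_act_def
  proof (intro exI[of _ "\<lambda>n. P.Phi n"] allI conjI ballI impI)
    fix n
    show "P.Phi n \<in> ring_iso (tensor R A eta (F n \<times> B n)) (tensor R (tensor R A eta (F n)) (tunit R A eta (F n)) (B n))"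
      by (rule P.Phi_iso)
    show "\<And>r. r \<in> carrier R \<Longrightarrow> P.Phi n (tunit R A eta (F n \<times> B n) r) = tunit R (tensor R A eta (F n)) (tunit R A eta (F n)) (B n) r"
      by (rule P.Phi(3))
    show "\<And>f b a. f \<in> F n \<Longrightarrow> b \<in> B n \<Longrightarrow> a \<in> carrier A \<Longrightarrow>
      P.Phi n (tgen R A eta (F n \<times> B n) (f, b) a) = tgen R (tensor R A eta (F n)) (tunit R A eta (F n)) (B n) b (tgen R A eta (F n) f a)"
      by (rule P.Phi(2))
  qed (rule P.face P.degen; assumption)+
qed


end
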